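(* In the fixed-order setting, for any instance of CAP with $n$ agents and $m$ items, one can decide in $O(nm^3)$ time whether there exists an order-consistent contiguous allocation $\mathbf A$ that is equitable, i.e. $v_i(A_i)=v_j(A_j)$ for all $i,j\in N$, and construct one if it exists.
   Context: An instance of CAP consists of agents $N=[n]$ and indivisible items $M=\{g_1,\dots,g_m\}$ arranged on a path in index order; each agent $i$ has an additive valuation $v_i:2^M\to\mathbb{Z}_{\ge0}$, and every item is valued positively by some agent. An allocation $(A_1,\dots,A_n)$ is a partition of $M$ into possibly empty bundles. It is order-consistent contiguous if there are indices $1=k_1\le k_2\le\dots\le k_{n+1}=m+1$ with $A_i=\{g_{k_i},\dots,g_{k_{i+1}-1}\}$ for all $i$; the fixed-order setting allows only such allocations. *)

theory Defs
  imports Main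
begin

(* Agents are 0..n-1, items (on the path, in index order) are 0..m-1.
   An additive valuation is given by item values: v i g = v_i({g}). *)

definition bundle_val :: "(nat \<Rightarrow> nat \<Rightarrow> nat) \<Rightarrow> (nat \<Rightarrow> nat) \<Rightarrow> nat \<Rightarrow> nat" where
  "bundle_val v k i = (\<Sum>g\<in>{k i..<k (Suc i)}. v i g)"

(* cut points k 0 = 0 <= k 1 <= ... <= k n = m; agent i gets items k i .. k (i+1) - 1 *)
definition occ :: "nat \<Rightarrow> nat \<Rightarrow> (nat \<Rightarrow> nat) \<Rightarrow> bool" where
  "occ n m k \<longleftrightarrow> k 0 = 0 \<and> k n = m \<and> (\<forall>i<n. k i \<le> k (Suc i))"

definition equitable :: "nat \<Rightarrow> (nat \<Rightarrow> nat \<Rightarrow> nat) \<Rightarrow> (nat \<Rightarrow> nat) \<Rightarrow> bool" where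
  "equitable n v k \<longleftrightarrow> (\<forall>i<n. \<forall>j<n. bundle_val v k i = bundle_val v k j)"

definition cap_instance :: "nat \<Rightarrow> nat \<Rightarrow> (nat \<Rightarrow> nat \<Rightarrow> nat) \<Rightarrow> bool" where
  "cap_instance n m v \<longleftrightarrow> 1 \<le> n \<and> (\<forall>g<m. \<exists>i<n. 0 < v i g)"

datatype exp = Const int | Load exp | Add exp exp | Sub exp exp

primrec eval :: "exp \<Rightarrow> (int \<Rightarrow> int) \<Rightarrow> int" where
  "eval (Const c) s = c"
| "eval (Load e) s = s (eval e s)"
| "eval (Add a b) s = eval a s + eval b s"
| "eval (Sub a b) s = eval a s - eval b s"

datatype com = Skip | Store exp exp | Seq com com | IfPos exp com com | WhilePos exp com

(* big_step c s t s': running c from memory s terminates in memory s' using t steps *)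
inductive big_step :: "com \<Rightarrow> (int \<Rightarrow> int) \<Rightarrow> nat \<Rightarrow> (int \<Rightarrow> int) \<Rightarrow> bool" where
  Skip: "big_step Skip s 1 s"
| Store: "big_step (Store a e) s 1 (s(eval a s := eval e s))"
| Seq: "big_step c1 s t1 s1 \<Longrightarrow> big_step c2 s1 t2 s2 \<Longrightarrow> big_step (Seq c1 c2) s (t1 + t2) s2"
| IfT: "0 < eval b s \<Longrightarrow> big_step c1 s t s' \<Longrightarrow> big_step (IfPos b c1 c2) s (Suc t) s'"
| IfF: "\<not> 0 < eval b s \<Longrightarrow> big_step c2 s t s' \<Longrightarrow> big_step (IfPos b c1 c2) s (Suc t) s'"
| WhileF: "\<not> 0 < eval b s \<Longrightarrow> big_step (WhilePos b c) s 1 s"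
| WhileT: "0 < eval b s \<Longrightarrow> big_step c s t1 s1 \<Longrightarrow> big_step (WhilePos b c) s1 t2 s2
           \<Longrightarrow> big_step (WhilePos b c) s (Suc (t1 + t2)) s2"

(* input encoding: mem 0 = n, mem 1 = m, mem (2 + i*m + g) = v_i(g_g) *)
definition enc :: "nat \<Rightarrow> nat \<Rightarrow> (nat \<Rightarrow> nat \<Rightarrow> nat) \<Rightarrow> int \<Rightarrow> int" where
  "enc n m v a =
     (if a = 0 then int n else if a = 1 then int m
      else if (\<exists>i<n. \<exists>g<m. a = 2 + int (i * m + g))
      then (THE x. \<exists>i<n. \<exists>g<m. a = 2 + int (i * m + g) \<and> x = int (v i g))
      else 0)"

(* output decoding: cut point k_(i+1) (0-based k i) is read from mem (1 + i) *)
definition dec_cuts :: "(int \<Rightarrow> int) \<Rightarrow> nat \<Rightarrow> nat" where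
  "dec_cuts s i = nat (s (1 + int i))"

end

theory Submission
  imports Defs
begin


definition wp :: "com \<Rightarrow> (int\<Rightarrow>int) \<Rightarrow> (nat \<Rightarrow> (int\<Rightarrow>int) \<Rightarrow> bool) \<Rightarrow> bool" where
  "wp c s Q \<longleftrightarrow> (\<exists>t s'. big_step c s t s' \<and> Q t s')"

lemma wp_store: "Q 1 (s(eval a s := eval e s)) \<Longrightarrow> wp (Store a e) s Q"
  unfolding wp_def by (blast intro: big_step.Store)

lemma wp_skip: "Q 1 s \<Longrightarrow> wp Skip s Q"
  unfolding wp_def by (blast intro: big_step.Skip)

lemma wp_seq: "wp c1 s (\<lambda>t1 s1. wp c2 s1 (\<lambda>t2 s2. Q (t1+t2) s2)) \<Longrightarrow> wp (Seq c1 c2) s Q"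
  unfolding wp_def by (blast intro: big_step.Seq)

lemma wp_if: "(0 < eval b s \<Longrightarrow> wp c1 s (\<lambda>t. Q (Suc t))) \<Longrightarrow> (\<not> 0 < eval b s \<Longrightarrow> wp c2 s (\<lambda>t. Q (Suc t)))
   \<Longrightarrow> wp (IfPos b c1 c2) s Q"
  unfolding wp_def by (cases "0 < eval b s") (blast intro: big_step.IfT big_step.IfF)+

lemma wp_mono: "wp c s Q \<Longrightarrow> (\<And>t s'. Q t s' \<Longrightarrow> R t s') \<Longrightarrow> wp c s R"
  unfolding wp_def by blast

lemma while_aux:
  assumes cond: "\<And>k s. Inv k s \<Longrightarrow> 0 < eval b s \<longleftrightarrow> 0 < k"
  and body: "\<And>k s. Inv (Suc k) s \<Longrightarrow> wp c s (\<lambda>t s'. t \<le> B \<and> (\<exists>k'\<le>k. Inv k' s'))"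
  shows "Inv k s \<Longrightarrow> \<exists>t s'. big_step (WhilePos b c) s t s' \<and> t \<le> k*(B+1)+1 \<and> Inv 0 s'"
proof (induction k arbitrary: s rule: less_induct)
  case (less k)
  show ?case
  proof (cases k)
    case 0
    with less.prems cond have "\<not> 0 < eval b s" by auto
    then have "big_step (WhilePos b c) s 1 s" by (rule big_step.WhileF)
    then show ?thesis using less.prems 0 by auto
  next
    case (Suc j)
    with less.prems cond have b: "0 < eval b s" by auto
    from body[of j s] less.prems Suc obtain t1 s1 k' where
      1: "big_step c s t1 s1" "t1 \<le> B" "k' \<le> j" "Inv k' s1" unfolding wp_def by blast
    from less.IH[of k' s1] 1 Suc obtain t2 s2 where
      2: "big_step (WhilePos b c) s1 t2 s2" "t2 \<le> k'*(B+1)+1" "Inv 0 s2" by auto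
    have "big_step (WhilePos b c) s (Suc (t1+t2)) s2" using b 1 2 by (blast intro: big_step.WhileT)
    moreover have "Suc (t1+t2) \<le> k*(B+1)+1"
    proof -
      have "k'*(B+1) \<le> j*(B+1)" using 1 by (intro mult_le_mono1) simp
      then show ?thesis using 1 2 Suc by simp
    qed
    ultimately show ?thesis using 2 by blast
  qed
qed

lemma wp_while:
  assumes "Inv k s" "\<And>k s. Inv k s \<Longrightarrow> 0 < eval b s \<longleftrightarrow> 0 < k"
  "\<And>k s. Inv (Suc k) s \<Longrightarrow> wp c s (\<lambda>t s'. t \<le> B \<and> (\<exists>k'\<le>k. Inv k' s'))"
  "\<And>t s'. Inv 0 s' \<Longrightarrow> t \<le> k*(B+1)+1 \<Longrightarrow> Q t s'"
  shows "wp (WhilePos b c) s Q"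
  using while_aux[of Inv b c B k s] assms unfolding wp_def by blast



definition Ssum :: "(nat\<Rightarrow>nat\<Rightarrow>nat) \<Rightarrow> nat \<Rightarrow> nat \<Rightarrow> nat \<Rightarrow> nat" where
  "Ssum v i p q = (\<Sum>g\<in>{p..<q}. v i g)"

definition good :: "nat \<Rightarrow> nat \<Rightarrow> (nat\<Rightarrow>nat\<Rightarrow>nat) \<Rightarrow> nat \<Rightarrow> nat \<Rightarrow> nat \<Rightarrow> bool" where
  "good n m v x i p \<longleftrightarrow> (\<exists>k. k i = p \<and> k n = m \<and>
     (\<forall>j. i \<le> j \<and> j < n \<longrightarrow> k j \<le> k (Suc j) \<and> Ssum v j (k j) (k (Suc j)) = x))"

lemma good_n: "good n m v x n p \<longleftrightarrow> p = m"
  unfolding good_def by auto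

lemma chain_le:
  fixes k :: "nat \<Rightarrow> nat"
  assumes "\<forall>j. i \<le> j \<and> j < n \<longrightarrow> k j \<le> k (Suc j)" "i \<le> j" "j \<le> n"
  shows "k i \<le> k j"
  using assms(2,3)
proof (induction j)
  case 0 then show ?case by simp
next
  case (Suc j)
  show ?case
  proof (cases "i \<le> j")
    case True
    then have "k i \<le> k j" using Suc by simp
    moreover have "k j \<le> k (Suc j)" using assms(1) True Suc.prems by simp
    ultimately show ?thesis by simp
  next
    case False then have "i = Suc j" using Suc.prems by simp
    then show ?thesis by simp
  qed
qed

lemma good_le: "i \<le> n \<Longrightarrow> good n m v x i p \<Longrightarrow> p \<le> m"
proof -
  assume i: "i \<le> n" and "good n m v x i p"
  then obtain k where k: "k i = p" "k n = m" "\<forall>j. i \<le> j \<and> j < n \<longrightarrow> k j \<le> k (Suc j)"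
    unfolding good_def by blast
  show "p \<le> m" using chain_le[OF k(3), of n] i k by simp
qed

lemma good_step:
  assumes "i < n"
  shows "good n m v x i p \<longleftrightarrow> (\<exists>q. p \<le> q \<and> Ssum v i p q = x \<and> good n m v x (Suc i) q)"
proof
  assume "good n m v x i p"
  then obtain k where k: "k i = p" "k n = m"
    "\<forall>j. i \<le> j \<and> j < n \<longrightarrow> k j \<le> k (Suc j) \<and> Ssum v j (k j) (k (Suc j)) = x"
    unfolding good_def by blast
  have "good n m v x (Suc i) (k (Suc i))" unfolding good_def using k by auto
  then show "\<exists>q. p \<le> q \<and> Ssum v i p q = x \<and> good n m v x (Suc i) q" using k assms by auto
next
  assume "\<exists>q. p \<le> q \<and> Ssum v i p q = x \<and> good n m v x (Suc i) q"
  then obtain q k where q: "p \<le> q" "Ssum v i p q = x" "k (Suc i) = q" "k n = m"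
    "\<forall>j. Suc i \<le> j \<and> j < n \<longrightarrow> k j \<le> k (Suc j) \<and> Ssum v j (k j) (k (Suc j)) = x"
    unfolding good_def by blast
  define k' where "k' = k(i := p)"
  have "k' i = p" "k' n = m" using q assms by (auto simp: k'_def)
  moreover have "\<forall>j. i \<le> j \<and> j < n \<longrightarrow> k' j \<le> k' (Suc j) \<and> Ssum v j (k' j) (k' (Suc j)) = x"
  proof (intro allI impI)
    fix j assume j: "i \<le> j \<and> j < n"
    show "k' j \<le> k' (Suc j) \<and> Ssum v j (k' j) (k' (Suc j)) = x"
    proof (cases "j = i")
      case True then show ?thesis using q by (simp add: k'_def)
    next
      case False then show ?thesis using q j by (simp add: k'_def)
    qed
  qed
  ultimately show "good n m v x i p" unfolding good_def by blast
qed

lemma bv_Ssum: "bundle_val v k i = Ssum v i (k i) (k (Suc i))"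
  unfolding bundle_val_def Ssum_def by simp

lemma exists_iff:
  assumes "1 \<le> n"
  shows "(\<exists>k. occ n m k \<and> equitable n v k) \<longleftrightarrow> (\<exists>c\<le>m. good n m v (Ssum v 0 0 c) 0 0)"
proof
  assume "\<exists>k. occ n m k \<and> equitable n v k"
  then obtain k where k: "occ n m k" "equitable n v k" by blast
  have mono: "\<forall>j. 0 \<le> j \<and> j < n \<longrightarrow> k j \<le> k (Suc j)" using k(1) unfolding occ_def by auto
  have m1: "\<forall>j. 1 \<le> j \<and> j < n \<longrightarrow> k j \<le> k (Suc j)" using mono by blast
  have "k 1 \<le> k n" using chain_le[OF m1, of n] assms by blast
  then have c: "k 1 \<le> m" using k(1) unfolding occ_def by simp
  have k0: "k 0 = 0" "k n = m" using k(1) unfolding occ_def by auto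
  have B: "\<forall>j. 0 \<le> j \<and> j < n \<longrightarrow> k j \<le> k (Suc j) \<and> Ssum v j (k j) (k (Suc j)) = Ssum v 0 0 (k 1)"
  proof (intro allI impI)
    fix j assume j: "0 \<le> j \<and> j < n"
    have a: "k j \<le> k (Suc j)" using mono j by blast
    have n0: "0 < n" using assms by simp
    have "bundle_val v k j = bundle_val v k 0" using k(2)[unfolded equitable_def, rule_format, of j 0] j n0 by blast
    then have b: "Ssum v j (k j) (k (Suc j)) = Ssum v 0 0 (k 1)"
      using k0 unfolding bv_Ssum by simp
    show "k j \<le> k (Suc j) \<and> Ssum v j (k j) (k (Suc j)) = Ssum v 0 0 (k 1)" using a b by blast
  qed
  have "good n m v (Ssum v 0 0 (k 1)) 0 0" unfolding good_def
    apply (rule exI[of _ k]) using k0 B by blast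
  then show "\<exists>c\<le>m. good n m v (Ssum v 0 0 c) 0 0" using c by blast
next
  assume "\<exists>c\<le>m. good n m v (Ssum v 0 0 c) 0 0"
  then obtain x k where k: "k 0 = 0" "k n = m"
    "\<forall>j. 0 \<le> j \<and> j < n \<longrightarrow> k j \<le> k (Suc j) \<and> Ssum v j (k j) (k (Suc j)) = x"
    unfolding good_def by blast
  have "occ n m k" unfolding occ_def using k by auto
  moreover have "equitable n v k" unfolding equitable_def using k by (auto simp: bv_Ssum)
  ultimately show "\<exists>k. occ n m k \<and> equitable n v k" by blast
qed


definition rowok :: "nat \<Rightarrow> nat \<Rightarrow> (nat\<Rightarrow>nat\<Rightarrow>nat) \<Rightarrow> nat \<Rightarrow> (nat \<Rightarrow> nat \<Rightarrow> int) \<Rightarrow> nat \<Rightarrow> bool" where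
  "rowok n m v x G i \<longleftrightarrow> (\<forall>p\<le>m. 0 \<le> G i p \<and> (G i p \<noteq> 0 \<longleftrightarrow> good n m v x i p))"

definition ptrok :: "nat \<Rightarrow> nat \<Rightarrow> (nat\<Rightarrow>nat\<Rightarrow>nat) \<Rightarrow> nat \<Rightarrow> (nat \<Rightarrow> nat \<Rightarrow> int) \<Rightarrow> nat \<Rightarrow> bool" where
  "ptrok n m v x G i \<longleftrightarrow> (\<forall>p\<le>m. G i p \<noteq> 0 \<longrightarrow>
     (\<exists>q. G i p = int q + 1 \<and> p \<le> q \<and> q \<le> m \<and> Ssum v i p q = x \<and> good n m v x (Suc i) q))"

fun kseq :: "(nat \<Rightarrow> nat \<Rightarrow> int) \<Rightarrow> nat \<Rightarrow> nat" where
  "kseq G 0 = 0"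
| "kseq G (Suc j) = nat (G j (kseq G j)) - 1"

lemma kseq_step:
  assumes rows: "\<forall>i\<le>n. rowok n m v x G i" and ptrs: "\<forall>i<n. ptrok n m v x G i"
   and j: "j \<le> n" and gd: "good n m v x j p" and pm: "p \<le> m"
  shows "1 \<le> G j p \<and> (j < n \<longrightarrow> (\<exists>q. G j p = int q + 1 \<and> p \<le> q \<and> q \<le> m \<and> Ssum v j p q = x \<and> good n m v x (Suc j) q))"
proof -
  have r: "0 \<le> G j p \<and> (G j p \<noteq> 0 \<longleftrightarrow> good n m v x j p)" using rows j pm unfolding rowok_def by blast
  then have nz: "1 \<le> G j p" using gd by linarith
  moreover have "j < n \<longrightarrow> (\<exists>q. G j p = int q + 1 \<and> p \<le> q \<and> q \<le> m \<and> Ssum v j p q = x \<and> good n m v x (Suc j) q)"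
  proof
    assume "j < n"
    then have "ptrok n m v x G j" using ptrs by blast
    then show "\<exists>q. G j p = int q + 1 \<and> p \<le> q \<and> q \<le> m \<and> Ssum v j p q = x \<and> good n m v x (Suc j) q"
      unfolding ptrok_def using pm nz by auto
  qed
  ultimately show ?thesis by blast
qed

lemma kseq_props:
  assumes rows: "\<forall>i\<le>n. rowok n m v x G i" and ptrs: "\<forall>i<n. ptrok n m v x G i"
    and g0: "good n m v x 0 0"
  shows "j \<le> n \<Longrightarrow> good n m v x j (kseq G j) \<and> kseq G j \<le> m \<and> 1 \<le> G j (kseq G j)
     \<and> (j < n \<longrightarrow> kseq G j \<le> kseq G (Suc j) \<and> Ssum v j (kseq G j) (kseq G (Suc j)) = x)"
proof (induction j)
  case 0
  have gd: "good n m v x 0 (kseq G 0)" using g0 by simp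
  have le: "kseq G 0 \<le> m" by simp
  note st = kseq_step[OF rows ptrs 0 gd le]
  show ?case
  proof (intro conjI impI gd le)
    show "1 \<le> G 0 (kseq G 0)" using st by blast
    assume "0 < n"
    then obtain q where q: "G 0 (kseq G 0) = int q + 1" "kseq G 0 \<le> q" "Ssum v 0 (kseq G 0) q = x"
      using st by blast
    have "kseq G (Suc 0) = q" using q by simp
    then show "kseq G 0 \<le> kseq G (Suc 0)" "Ssum v 0 (kseq G 0) (kseq G (Suc 0)) = x" using q by auto
  qed
next
  case (Suc j)
  then have jn: "j < n" by simp
  have IH: "good n m v x j (kseq G j)" "kseq G j \<le> m" using Suc by auto
  note st = kseq_step[OF rows ptrs _ IH]
  obtain q where q: "G j (kseq G j) = int q + 1" "q \<le> m" "good n m v x (Suc j) q"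
    using st jn by fastforce
  have ks: "kseq G (Suc j) = q" using q by simp
  have gd: "good n m v x (Suc j) (kseq G (Suc j))" using ks q by simp
  have le: "kseq G (Suc j) \<le> m" using ks q by simp
  note st2 = kseq_step[OF rows ptrs Suc.prems gd le]
  show ?case
  proof (intro conjI impI gd le)
    show "1 \<le> G (Suc j) (kseq G (Suc j))" using st2 by blast
    assume sj: "Suc j < n"
    then obtain q' where q': "G (Suc j) (kseq G (Suc j)) = int q' + 1" "kseq G (Suc j) \<le> q'"
      "Ssum v (Suc j) (kseq G (Suc j)) q' = x"
      using st2 by blast
    have "kseq G (Suc (Suc j)) = q'" using q' by simp
    then show "kseq G (Suc j) \<le> kseq G (Suc (Suc j))" "Ssum v (Suc j) (kseq G (Suc j)) (kseq G (Suc (Suc j))) = x"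
      using q' by auto
  qed
qed

lemma kseq_alloc:
  assumes rows: "\<forall>i\<le>n. rowok n m v x G i" and ptrs: "\<forall>i<n. ptrok n m v x G i"
    and g0: "good n m v x 0 0" and k: "\<forall>j\<le>n. k j = kseq G j"
  shows "occ n m k \<and> equitable n v k"
proof -
  note P = kseq_props[OF rows ptrs g0]
  have kn: "kseq G n = m" using P[of n] good_n by blast
  have e: "\<forall>i<n. k i \<le> k (Suc i) \<and> bundle_val v k i = x"
  proof (intro allI impI)
    fix i assume i: "i < n"
    have "k i = kseq G i" "k (Suc i) = kseq G (Suc i)" using k i by auto
    then show "k i \<le> k (Suc i) \<and> bundle_val v k i = x" using P[of i] i unfolding bv_Ssum by simp
  qed
  have "occ n m k" unfolding occ_def using e k kn by simp
  moreover have "equitable n v k" unfolding equitable_def using e by simp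
  ultimately show ?thesis by blast
qed



abbreviation V :: "int \<Rightarrow> exp" where "V a \<equiv> Load (Const a)"

definition gaddr :: "nat \<Rightarrow> nat \<Rightarrow> nat \<Rightarrow> int" where
  "gaddr m i p = -100 - int (i*(m+1) + p)"

lemma gaddr_le: "gaddr m i p \<le> -100"
  using of_nat_0_le_iff[of "i*(m+1)+p"] unfolding gaddr_def by linarith

lemma gaddr_ne1[simp]: "-99 \<le> c \<Longrightarrow> (gaddr m i p = c) = False"
  using gaddr_le[of m i p] by auto
lemma gaddr_ne2[simp]: "-99 \<le> c \<Longrightarrow> (c = gaddr m i p) = False"
  using gaddr_le[of m i p] by auto

lemma gaddr_sub[simp]: "gaddr m i 0 - int p = gaddr m i p"
  unfolding gaddr_def by simp

lemma gaddr_next[simp]: "gaddr m i 0 - (int m + 1) = gaddr m (Suc i) 0"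
  unfolding gaddr_def by (simp add: algebra_simps)

lemma gaddr_inj:
  assumes "p \<le> m" "p' \<le> m"
  shows "gaddr m i p = gaddr m i' p' \<longleftrightarrow> i = i' \<and> p = p'"
proof
  assume "gaddr m i p = gaddr m i' p'"
  then have "int (i*(m+1) + p) = int (i'*(m+1) + p')" unfolding gaddr_def by linarith
  then have e: "i*(m+1) + p = i'*(m+1) + p'" by (simp only: of_nat_eq_iff)
  have dm: "(c*(m+1) + r) div (m+1) = c \<and> (c*(m+1) + r) mod (m+1) = r" if "r \<le> m" for c r :: nat
  proof -
    have "(r + c*(m+1)) div (m+1) = c + r div (m+1)" using div_mult_self1[of "m+1" r c] by simp
    moreover have "(r + c*(m+1)) mod (m+1) = r mod (m+1)" by (rule mod_mult_self1)
    ultimately show ?thesis using that by (simp add: add.commute)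
  qed
  have "(i*(m+1) + p) div (m+1) = i" "(i*(m+1) + p) mod (m+1) = p" using dm assms by blast+
  moreover have "(i'*(m+1) + p') div (m+1) = i'" "(i'*(m+1) + p') mod (m+1) = p'" using dm assms by blast+
  ultimately show "i = i' \<and> p = p'" using e by metis
qed simp

definition qbody :: com where
"qbody = Seq (IfPos (Sub (V (-4)) (V (-9))) Skip
   (IfPos (Sub (V (-9)) (V (-4))) Skip
     (IfPos (Load (Sub (Sub (V (-10)) (V (-3))) (V (-8))))
        (Store (Sub (V (-10)) (V (-7))) (Add (V (-8)) (Const 1))) Skip)))
  (Seq (Store (Const (-9)) (Add (V (-9)) (Load (Add (V (-11)) (V (-8))))))
       (Store (Const (-8)) (Add (V (-8)) (Const 1))))"

definition qloop :: com where
  "qloop = WhilePos (Sub (V (-3)) (V (-8))) qbody"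

lemma qbody_step:
  assumes "s (-3) = int m + 1" "s (-4) = int x" "s (-10) = gaddr m I 0" "s (-11) = 2 + int (I*m)"
    "s (-7) = int P" "s (-8) = int Q" "s (-9) = S"
  shows "wp qbody s (\<lambda>t s'. t \<le> 10 \<and> s' = (let s1 = (if S = int x \<and> 0 < s (gaddr m (Suc I) Q)
        then s(gaddr m I P := int Q + 1) else s) in
      s1(-9 := S + s1 (2 + int (I*m) + int Q), -8 := int Q + 1)))"
  unfolding qbody_def
  apply (intro wp_seq wp_if wp_store wp_skip)
  using assms apply (simp_all add: Let_def)
  done

definition qgst :: "nat \<Rightarrow> nat \<Rightarrow> (nat\<Rightarrow>nat\<Rightarrow>nat) \<Rightarrow> nat \<Rightarrow> nat \<Rightarrow> nat \<Rightarrow> nat \<Rightarrow> int \<Rightarrow> bool" where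
  "qgst n m v x I P Q w \<longleftrightarrow>
     (w = 0 \<and> (\<forall>q. P \<le> q \<and> q < Q \<longrightarrow> \<not> (Ssum v I P q = x \<and> good n m v x (Suc I) q))) \<or>
     (\<exists>q. w = int q + 1 \<and> P \<le> q \<and> q < Q \<and> Ssum v I P q = x \<and> good n m v x (Suc I) q)"

lemma Ssum_Suc: "P \<le> Q \<Longrightarrow> Ssum v I P (Suc Q) = Ssum v I P Q + v I Q"
  unfolding Ssum_def by simp

lemma Ssum_self[simp]: "Ssum v I P P = 0"
  unfolding Ssum_def by simp

lemma qgst_step:
  assumes "qgst n m v x I P Q w" "P \<le> Q"
  shows "qgst n m v x I P (Suc Q) (if (Ssum v I P Q = x \<and> good n m v x (Suc I) Q) then int Q + 1 else w)"
  using assms unfolding qgst_def by (auto simp: less_Suc_eq)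

lemma qloop_spec:
  assumes s: "s (-3) = int m + 1" "s (-4) = int x" "s (-10) = gaddr m I 0" "s (-11) = 2 + int (I*m)"
    "s (-7) = int P" "s (-8) = int P" "s (-9) = 0" "s (gaddr m I P) = 0" and Pm: "P \<le> m"
   and inp: "\<forall>q<m. s (2 + int(I*m) + int q) = int (v I q)"
   and row: "\<forall>q\<le>m. 0 \<le> s (gaddr m (Suc I) q) \<and> (s (gaddr m (Suc I) q) \<noteq> 0 \<longleftrightarrow> good n m v x (Suc I) q)"
   and post: "\<And>t s'. t \<le> (m+1)*11+1 \<Longrightarrow> (\<forall>a. a \<noteq> -9 \<and> a \<noteq> -8 \<and> a \<noteq> gaddr m I P \<longrightarrow> s' a = s a)
        \<Longrightarrow> qgst n m v x I P (m+1) (s' (gaddr m I P)) \<Longrightarrow> Q t s'"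
  shows "wp qloop s Q"
  unfolding qloop_def
proof (rule wp_while[where Inv = "\<lambda>k s'. \<exists>Q. Q + k = m+1 \<and> P \<le> Q \<and> s' (-8) = int Q
      \<and> (Q \<le> m \<longrightarrow> s' (-9) = int (Ssum v I P Q))
      \<and> (\<forall>a. a \<noteq> -9 \<and> a \<noteq> -8 \<and> a \<noteq> gaddr m I P \<longrightarrow> s' a = s a)
      \<and> qgst n m v x I P Q (s' (gaddr m I P))" and k = "m+1-P" and B = 10])
  show "\<exists>Q. Q + (m + 1 - P) = m+1 \<and> P \<le> Q \<and> s (-8) = int Q
      \<and> (Q \<le> m \<longrightarrow> s (-9) = int (Ssum v I P Q))
      \<and> (\<forall>a. a \<noteq> -9 \<and> a \<noteq> -8 \<and> a \<noteq> gaddr m I P \<longrightarrow> s a = s a)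
      \<and> qgst n m v x I P Q (s (gaddr m I P))"
    using s Pm by (intro exI[of _ P]) (auto simp add: qgst_def)
next
  fix k s'
  assume "\<exists>Q. Q + k = m+1 \<and> P \<le> Q \<and> s' (-8) = int Q
      \<and> (Q \<le> m \<longrightarrow> s' (-9) = int (Ssum v I P Q))
      \<and> (\<forall>a. a \<noteq> -9 \<and> a \<noteq> -8 \<and> a \<noteq> gaddr m I P \<longrightarrow> s' a = s a)
      \<and> qgst n m v x I P Q (s' (gaddr m I P))"
  then obtain Q where Q: "Q + k = m+1" "s' (-8) = int Q" "\<forall>a. a \<noteq> -9 \<and> a \<noteq> -8 \<and> a \<noteq> gaddr m I P \<longrightarrow> s' a = s a"
    by blast
  have "s' (-3) = int m + 1" using Q(3) s by simp
  then show "0 < eval (Sub (V (-3)) (V (-8))) s' \<longleftrightarrow> 0 < k" using Q by (simp; linarith)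
next
  fix k s1
  assume "\<exists>Q. Q + Suc k = m+1 \<and> P \<le> Q \<and> s1 (-8) = int Q
      \<and> (Q \<le> m \<longrightarrow> s1 (-9) = int (Ssum v I P Q))
      \<and> (\<forall>a. a \<noteq> -9 \<and> a \<noteq> -8 \<and> a \<noteq> gaddr m I P \<longrightarrow> s1 a = s a)
      \<and> qgst n m v x I P Q (s1 (gaddr m I P))"
  then obtain Q where Q: "Q + Suc k = m+1" "P \<le> Q" "s1 (-8) = int Q" "s1 (-9) = int (Ssum v I P Q)"
      "\<forall>a. a \<noteq> -9 \<and> a \<noteq> -8 \<and> a \<noteq> gaddr m I P \<longrightarrow> s1 a = s a"
      "qgst n m v x I P Q (s1 (gaddr m I P))"
    by fastforce
  have Qm: "Q \<le> m" using Q(1) by simp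
  have s1: "s1 (-3) = int m + 1" "s1 (-4) = int x" "s1 (-10) = gaddr m I 0" "s1 (-11) = 2 + int (I*m)"
    "s1 (-7) = int P" using Q(5) s by simp_all
  have gn: "gaddr m (Suc I) Q \<noteq> gaddr m I P" using gaddr_inj[OF Qm Pm] by simp
  have rowQ: "s1 (gaddr m (Suc I) Q) = s (gaddr m (Suc I) Q)" using Q(5) gn by simp
  have goodQ: "0 < s1 (gaddr m (Suc I) Q) \<longleftrightarrow> good n m v x (Suc I) Q"
  proof -
    have "0 \<le> s (gaddr m (Suc I) Q) \<and> (s (gaddr m (Suc I) Q) \<noteq> 0 \<longleftrightarrow> good n m v x (Suc I) Q)"
      using row Qm by blast
    then show ?thesis using rowQ by auto
  qed
  define c where "c = (Ssum v I P Q = x \<and> good n m v x (Suc I) Q)"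
  define s1' where "s1' = (if c then s1(gaddr m I P := int Q + 1) else s1)"
  have eqc: "(s1 (-9) = int x \<and> 0 < s1 (gaddr m (Suc I) Q)) = c" using Q(4) goodQ c_def by simp
  have w: "wp qbody s1 (\<lambda>t s'. t \<le> 10 \<and> s' = s1'(-9 := s1(-9) + s1' (2 + int (I*m) + int Q), -8 := int Q + 1))"
    using qbody_step[OF s1 Q(3) refl] unfolding eqc s1'_def Let_def by simp
  have s1'o: "s1' a = s1 a" if "a \<noteq> gaddr m I P" for a using that unfolding s1'_def by simp
  have s1'g: "s1' (gaddr m I P) = (if c then int Q + 1 else s1 (gaddr m I P))" unfolding s1'_def by simp
  have rd: "Q < m \<Longrightarrow> s1' (2 + int (I*m) + int Q) = int (v I Q)"
  proof -
    assume "Q < m"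
    have "s1' (2 + int (I*m) + int Q) = s1 (2 + int (I*m) + int Q)" by (rule s1'o) simp
    also have "\<dots> = s (2 + int (I*m) + int Q)"
    proof -
      have pos: "0 \<le> 2 + int (I*m) + int Q" by simp
      have ne: "2 + int (I*m) + int Q \<noteq> gaddr m I P" using pos gaddr_le[of m I P] by linarith
      show ?thesis by (rule Q(5)[rule_format]) (use pos ne in linarith)
    qed
    also have "\<dots> = int (v I Q)" using inp \<open>Q < m\<close> by simp
    finally show ?thesis .
  qed
  show "wp qbody s1 (\<lambda>t s'. t \<le> 10 \<and> (\<exists>k'\<le>k. \<exists>Q. Q + k' = m+1 \<and> P \<le> Q \<and> s' (-8) = int Q
      \<and> (Q \<le> m \<longrightarrow> s' (-9) = int (Ssum v I P Q))
      \<and> (\<forall>a. a \<noteq> -9 \<and> a \<noteq> -8 \<and> a \<noteq> gaddr m I P \<longrightarrow> s' a = s a)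
      \<and> qgst n m v x I P Q (s' (gaddr m I P))))"
  proof (rule wp_mono[OF w])
    fix t s2 assume A: "t \<le> 10 \<and> s2 = s1'(-9 := s1(-9) + s1' (2 + int (I*m) + int Q), -8 := int Q + 1)"
    then have t: "t \<le> 10" and s2: "s2 = s1'(-9 := s1(-9) + s1' (2 + int (I*m) + int Q), -8 := int Q + 1)" by auto
    have 1: "Suc Q + k = m + 1" "P \<le> Suc Q" "s2 (-8) = int (Suc Q)" using Q s2 by auto
    have 2: "Suc Q \<le> m \<longrightarrow> s2 (- 9) = int (Ssum v I P (Suc Q))"
      using s2 rd Q(4) Ssum_Suc[OF Q(2)] by auto
    have 3: "\<forall>a. a \<noteq> -9 \<and> a \<noteq> -8 \<and> a \<noteq> gaddr m I P \<longrightarrow> s2 a = s a"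
      using s2 s1'o Q(5) by auto
    have "s2 (gaddr m I P) = (if c then int Q + 1 else s1 (gaddr m I P))" using s2 s1'g by simp
    then have 4: "qgst n m v x I P (Suc Q) (s2 (gaddr m I P))" using qgst_step[OF Q(6) Q(2)] c_def by simp
    show "t \<le> 10 \<and> (\<exists>k'\<le>k. \<exists>Q. Q + k' = m+1 \<and> P \<le> Q \<and> s2 (-8) = int Q
      \<and> (Q \<le> m \<longrightarrow> s2 (-9) = int (Ssum v I P Q))
      \<and> (\<forall>a. a \<noteq> -9 \<and> a \<noteq> -8 \<and> a \<noteq> gaddr m I P \<longrightarrow> s2 a = s a)
      \<and> qgst n m v x I P Q (s2 (gaddr m I P)))"
      using t 1 2 3 4 by blast
  qed
next
  fix t s'
  assume "\<exists>Q. Q + 0 = m+1 \<and> P \<le> Q \<and> s' (-8) = int Q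
      \<and> (Q \<le> m \<longrightarrow> s' (-9) = int (Ssum v I P Q))
      \<and> (\<forall>a. a \<noteq> -9 \<and> a \<noteq> -8 \<and> a \<noteq> gaddr m I P \<longrightarrow> s' a = s a)
      \<and> qgst n m v x I P Q (s' (gaddr m I P))" "t \<le> (m + 1 - P) * (10 + 1) + 1"
  then obtain Qf where "Qf = m+1" "(\<forall>a. a \<noteq> -9 \<and> a \<noteq> -8 \<and> a \<noteq> gaddr m I P \<longrightarrow> s' a = s a)"
      "qgst n m v x I P Qf (s' (gaddr m I P))" "t \<le> (m + 1 - P) * (10 + 1) + 1" by auto
  moreover have "(m + 1 - P) * (10 + 1) + 1 \<le> (m+1)*11+1" by simp
  ultimately show "Q t s'" using post by auto
qed

definition pbody :: com where
"pbody = Seq (Store (Sub (V (-10)) (V (-7))) (Const 0)) (Seq (Store (Const (-9)) (Const 0))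
   (Seq (Store (Const (-8)) (V (-7))) (Seq qloop (Store (Const (-7)) (Add (V (-7)) (Const 1))))))"

definition ploop :: com where
  "ploop = WhilePos (Sub (V (-3)) (V (-7))) pbody"

definition entok :: "nat \<Rightarrow> nat \<Rightarrow> (nat\<Rightarrow>nat\<Rightarrow>nat) \<Rightarrow> nat \<Rightarrow> nat \<Rightarrow> nat \<Rightarrow> int \<Rightarrow> bool" where
  "entok n m v x I p w \<longleftrightarrow> 0 \<le> w \<and> (w \<noteq> 0 \<longleftrightarrow> good n m v x I p) \<and>
     (w \<noteq> 0 \<longrightarrow> (\<exists>q. w = int q + 1 \<and> p \<le> q \<and> q \<le> m \<and> Ssum v I p q = x \<and> good n m v x (Suc I) q))"

lemma qgst_entok:
  assumes "I < n" "qgst n m v x I P (m+1) w"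
  shows "entok n m v x I P w"
proof -
  have gs: "good n m v x I P \<longleftrightarrow> (\<exists>q. P \<le> q \<and> Ssum v I P q = x \<and> good n m v x (Suc I) q)"
    using good_step[OF assms(1)] by blast
  have gl: "good n m v x (Suc I) q \<Longrightarrow> q \<le> m" for q using good_le[of "Suc I" n] assms(1) by simp
  show ?thesis using assms(2) unfolding qgst_def entok_def
  proof
    assume A: "w = 0 \<and> (\<forall>q. P \<le> q \<and> q < m + 1 \<longrightarrow> \<not> (Ssum v I P q = x \<and> good n m v x (Suc I) q))"
    then have "\<not> good n m v x I P" using gs gl by fastforce
    then show "0 \<le> w \<and> (w \<noteq> 0) = good n m v x I P \<and>
      (w \<noteq> 0 \<longrightarrow> (\<exists>q. w = int q + 1 \<and> P \<le> q \<and> q \<le> m \<and> Ssum v I P q = x \<and> good n m v x (Suc I) q))"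
      using A by simp
  next
    assume "\<exists>q. w = int q + 1 \<and> P \<le> q \<and> q < m + 1 \<and> Ssum v I P q = x \<and> good n m v x (Suc I) q"
    then obtain q where q: "w = int q + 1" "P \<le> q" "q \<le> m" "Ssum v I P q = x" "good n m v x (Suc I) q" by auto
    then have "good n m v x I P" using gs by blast
    then show "0 \<le> w \<and> (w \<noteq> 0) = good n m v x I P \<and>
      (w \<noteq> 0 \<longrightarrow> (\<exists>q. w = int q + 1 \<and> P \<le> q \<and> q \<le> m \<and> Ssum v I P q = x \<and> good n m v x (Suc I) q))"
      using q by auto
  qed
qed

lemma pbody_step:
  assumes s: "s (-3) = int m + 1" "s (-4) = int x" "s (-10) = gaddr m I 0" "s (-11) = 2 + int (I*m)"
    and In: "I < n"
   and inp: "\<forall>q<m. s (2 + int(I*m) + int q) = int (v I q)"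
   and row: "\<forall>q\<le>m. 0 \<le> s (gaddr m (Suc I) q) \<and> (s (gaddr m (Suc I) q) \<noteq> 0 \<longleftrightarrow> good n m v x (Suc I) q)"
   and s1: "P \<le> m" "s1 (-7) = int P"
     "\<forall>a. a \<noteq> -7 \<and> a \<noteq> -8 \<and> a \<noteq> -9 \<and> (\<forall>p<P. a \<noteq> gaddr m I p) \<longrightarrow> s1 a = s a"
  shows "wp pbody s1 (\<lambda>t s4. t \<le> 11*m+16 \<and> s4 (-7) = int P + 1 \<and>
     (\<forall>a. a \<noteq> -7 \<and> a \<noteq> -8 \<and> a \<noteq> -9 \<and> a \<noteq> gaddr m I P \<longrightarrow> s4 a = s1 a) \<and>
     entok n m v x I P (s4 (gaddr m I P)))"
proof -
  have e: "s1 (-3) = int m + 1" "s1 (-4) = int x" "s1 (-10) = gaddr m I 0" "s1 (-11) = 2 + int (I*m)"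
    using s s1(3) by simp_all
  define s2 where "s2 = s1(gaddr m I P := 0, -9 := 0, -8 := int P)"
  have h10: "\<forall>q<m. s2 (2 + int (I * m) + int q) = int (v I q)"
  proof (intro allI impI)
    fix q assume q: "q < m"
    have pos: "0 \<le> 2 + int (I*m) + int q" by simp
    have ne: "2 + int (I*m) + int q \<noteq> gaddr m I p" for p using pos gaddr_le[of m I p] by linarith
    have gen: "s2 A = s1 A" if "0 \<le> A" for A using that unfolding s2_def by simp
    have gen2: "s1 A = s A" if "0 \<le> A" for A by (rule s1(3)[rule_format]) (use that in auto)
    have "s2 (2 + int (I * m) + int q) = s1 (2 + int (I * m) + int q)" by (rule gen[OF pos])
    also have "\<dots> = s (2 + int (I * m) + int q)" by (rule gen2[OF pos])
    finally show "s2 (2 + int (I * m) + int q) = int (v I q)" using inp q by simp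
  qed
  have h11: "\<forall>q\<le>m. s2 (gaddr m (Suc I) q) = s (gaddr m (Suc I) q)"
  proof (intro allI impI)
    fix q assume q: "q \<le> m"
    have ne: "gaddr m (Suc I) q \<noteq> gaddr m I p" if "p \<le> m" for p using gaddr_inj[OF q that] by simp
    have "s2 (gaddr m (Suc I) q) = s1 (gaddr m (Suc I) q)" unfolding s2_def using ne[of P] s1(1) by simp
    also have "\<dots> = s (gaddr m (Suc I) q)" by (rule s1(3)[rule_format]) (use ne s1(1) in auto)
    finally show "s2 (gaddr m (Suc I) q) = s (gaddr m (Suc I) q)" .
  qed
  show ?thesis
  unfolding pbody_def
  apply (rule wp_seq, rule wp_store)+
  apply (simp add: e s1(2) flip: s2_def)
  apply (rule wp_seq)
  apply (rule qloop_spec[where n=n and m=m and v=v and x=x and I=I and P=P])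
  using s1 e apply (simp_all add: s2_def)[9]
  prefer 3
  apply (rule wp_store)
  apply simp
  using s1 qgst_entok[OF In] apply (simp add: s2_def)
  using h10 apply simp
  using h11 row apply simp
  done
qed

lemma ploop_spec:
  assumes s: "s (-3) = int m + 1" "s (-4) = int x" "s (-10) = gaddr m I 0" "s (-11) = 2 + int (I*m)"
    "s (-7) = 0"
    and In: "I < n"
   and inp: "\<forall>q<m. s (2 + int(I*m) + int q) = int (v I q)"
   and row: "\<forall>q\<le>m. 0 \<le> s (gaddr m (Suc I) q) \<and> (s (gaddr m (Suc I) q) \<noteq> 0 \<longleftrightarrow> good n m v x (Suc I) q)"
   and post: "\<And>t s'. t \<le> (m+1)*(11*m+17)+1 \<Longrightarrow>
      (\<forall>a. a \<noteq> -7 \<and> a \<noteq> -8 \<and> a \<noteq> -9 \<and> (\<forall>p\<le>m. a \<noteq> gaddr m I p) \<longrightarrow> s' a = s a) \<Longrightarrow>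
      (\<forall>p\<le>m. entok n m v x I p (s' (gaddr m I p))) \<Longrightarrow> Q t s'"
  shows "wp ploop s Q"
  unfolding ploop_def
proof (rule wp_while[where Inv = "\<lambda>k s1. \<exists>P. P + k = m+1 \<and> s1 (-7) = int P
      \<and> (\<forall>a. a \<noteq> -7 \<and> a \<noteq> -8 \<and> a \<noteq> -9 \<and> (\<forall>p<P. a \<noteq> gaddr m I p) \<longrightarrow> s1 a = s a)
      \<and> (\<forall>p<P. entok n m v x I p (s1 (gaddr m I p)))" and k = "m+1" and B = "11*m+16"])
  show "\<exists>P. P + (m+1) = m+1 \<and> s (-7) = int P
      \<and> (\<forall>a. a \<noteq> -7 \<and> a \<noteq> -8 \<and> a \<noteq> -9 \<and> (\<forall>p<P. a \<noteq> gaddr m I p) \<longrightarrow> s a = s a)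
      \<and> (\<forall>p<P. entok n m v x I p (s (gaddr m I p)))"
    using s by (intro exI[of _ 0]) simp
next
  fix k s1
  assume "\<exists>P. P + k = m+1 \<and> s1 (-7) = int P
      \<and> (\<forall>a. a \<noteq> -7 \<and> a \<noteq> -8 \<and> a \<noteq> -9 \<and> (\<forall>p<P. a \<noteq> gaddr m I p) \<longrightarrow> s1 a = s a)
      \<and> (\<forall>p<P. entok n m v x I p (s1 (gaddr m I p)))"
  then obtain P where P: "P + k = m+1" "s1 (-7) = int P"
      "\<forall>a. a \<noteq> -7 \<and> a \<noteq> -8 \<and> a \<noteq> -9 \<and> (\<forall>p<P. a \<noteq> gaddr m I p) \<longrightarrow> s1 a = s a"
    by blast
  have "s1 (-3) = int m + 1" using P(3) s by simp
  then show "0 < eval (Sub (V (-3)) (V (-7))) s1 \<longleftrightarrow> 0 < k" using P by (simp; linarith)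
next
  fix k s1
  assume "\<exists>P. P + Suc k = m+1 \<and> s1 (-7) = int P
      \<and> (\<forall>a. a \<noteq> -7 \<and> a \<noteq> -8 \<and> a \<noteq> -9 \<and> (\<forall>p<P. a \<noteq> gaddr m I p) \<longrightarrow> s1 a = s a)
      \<and> (\<forall>p<P. entok n m v x I p (s1 (gaddr m I p)))"
  then obtain P where P: "P + Suc k = m+1" "s1 (-7) = int P"
      "\<forall>a. a \<noteq> -7 \<and> a \<noteq> -8 \<and> a \<noteq> -9 \<and> (\<forall>p<P. a \<noteq> gaddr m I p) \<longrightarrow> s1 a = s a"
      "\<forall>p<P. entok n m v x I p (s1 (gaddr m I p))"
    by blast
  have Pm: "P \<le> m" using P(1) by simp
  show "wp pbody s1 (\<lambda>t s'. t \<le> 11*m+16 \<and> (\<exists>k'\<le>k. \<exists>P. P + k' = m+1 \<and> s' (-7) = int P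
      \<and> (\<forall>a. a \<noteq> -7 \<and> a \<noteq> -8 \<and> a \<noteq> -9 \<and> (\<forall>p<P. a \<noteq> gaddr m I p) \<longrightarrow> s' a = s a)
      \<and> (\<forall>p<P. entok n m v x I p (s' (gaddr m I p)))))"
  proof (rule wp_mono[OF pbody_step[OF s(1-4) In inp row Pm P(2) P(3)]])
    fix t s4 assume A: "t \<le> 11*m+16 \<and> s4 (-7) = int P + 1 \<and>
     (\<forall>a. a \<noteq> -7 \<and> a \<noteq> -8 \<and> a \<noteq> -9 \<and> a \<noteq> gaddr m I P \<longrightarrow> s4 a = s1 a) \<and>
     entok n m v x I P (s4 (gaddr m I P))"
    have 1: "Suc P + k = m + 1" "s4 (-7) = int (Suc P)" using A P(1) by auto
    have 2: "\<forall>a. a \<noteq> -7 \<and> a \<noteq> -8 \<and> a \<noteq> -9 \<and> (\<forall>p<Suc P. a \<noteq> gaddr m I p) \<longrightarrow> s4 a = s a"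
      using A P(3) by auto
    have 3: "\<forall>p<Suc P. entok n m v x I p (s4 (gaddr m I p))"
    proof (intro allI impI)
      fix p assume p: "p < Suc P"
      show "entok n m v x I p (s4 (gaddr m I p))"
      proof (cases "p = P")
        case True then show ?thesis using A by simp
      next
        case False
        then have "p < P" using p by simp
        then have ne: "gaddr m I p \<noteq> gaddr m I P" using gaddr_inj[of p m P I I] Pm by simp
        have "s4 (gaddr m I p) = s1 (gaddr m I p)" using A ne by simp
        then show ?thesis using P(4) \<open>p < P\<close> by simp
      qed
    qed
    show "t \<le> 11*m+16 \<and> (\<exists>k'\<le>k. \<exists>P. P + k' = m+1 \<and> s4 (-7) = int P
      \<and> (\<forall>a. a \<noteq> -7 \<and> a \<noteq> -8 \<and> a \<noteq> -9 \<and> (\<forall>p<P. a \<noteq> gaddr m I p) \<longrightarrow> s4 a = s a)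
      \<and> (\<forall>p<P. entok n m v x I p (s4 (gaddr m I p))))"
      using A 1 2 3 by blast
  qed
next
  fix t s'
  assume "\<exists>P. P + 0 = m+1 \<and> s' (-7) = int P
      \<and> (\<forall>a. a \<noteq> -7 \<and> a \<noteq> -8 \<and> a \<noteq> -9 \<and> (\<forall>p<P. a \<noteq> gaddr m I p) \<longrightarrow> s' a = s a)
      \<and> (\<forall>p<P. entok n m v x I p (s' (gaddr m I p)))" and t: "t \<le> (m+1) * (11*m+16 + 1) + 1"
  then obtain P where P: "P = m+1" "(\<forall>a. a \<noteq> -7 \<and> a \<noteq> -8 \<and> a \<noteq> -9 \<and> (\<forall>p<P. a \<noteq> gaddr m I p) \<longrightarrow> s' a = s a)"
      "(\<forall>p<P. entok n m v x I p (s' (gaddr m I p)))" by auto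
  have t': "t \<le> (m+1)*(11*m+17)+1" using t by (simp add: add.commute)
  show "Q t s'" by (rule post[OF t']) (use P in \<open>auto simp: less_Suc_eq_le\<close>)
qed

lemma wp_store_seq: "wp c (s(eval a s := eval e s)) (\<lambda>t. Q (Suc t)) \<Longrightarrow> wp (Seq (Store a e) c) s Q"
  by (rule wp_seq, rule wp_store) simp

lemma wp_eqI: "wp c st Q \<Longrightarrow> s = st \<Longrightarrow> wp c s Q" by simp

lemma gaddr_prev[simp]: "gaddr m (Suc J) 0 + (int m + 1) = gaddr m J 0"
  unfolding gaddr_def by (simp add: algebra_simps)

definition agentbody :: com where
"agentbody = Seq (Store (Const (-6)) (Sub (V (-6)) (Const 1))) (Seq (Store (Const (-10)) (Add (V (-10)) (V (-3))))
   (Seq (Store (Const (-11)) (Sub (V (-11)) (V (-2)))) (Seq (Store (Const (-7)) (Const 0)) ploop)))"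

definition aloop :: com where
  "aloop = WhilePos (V (-6)) agentbody"

lemma entok_rows:
  assumes "\<forall>p\<le>m. entok n m v x i p (G i p)"
  shows "rowok n m v x G i" "ptrok n m v x G i"
  using assms unfolding entok_def rowok_def ptrok_def by blast+

lemma rown_entok_like:
  assumes "\<forall>p\<le>m. G n p = (if p = m then 1 else 0)"
  shows "rowok n m v x G n"
  using assms unfolding rowok_def good_n by auto

lemma abody_step:
  assumes s: "s (-2) = int m" "s (-3) = int m + 1" "s (-4) = int x"
   and inp: "\<forall>i<n. \<forall>q<m. s (2 + int(i*m) + int q) = int (v i q)"
   and rown: "\<forall>p\<le>m. s (gaddr m n p) = (if p = m then 1 else 0)"
   and J: "Suc J \<le> n"
   and s1: "s1 (-6) = int (Suc J)" "s1 (-10) = gaddr m (Suc J) 0" "s1 (-11) = 2 + int (Suc J * m)"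
     "\<forall>a. a \<noteq> -6 \<and> a \<noteq> -7 \<and> a \<noteq> -8 \<and> a \<noteq> -9 \<and> a \<noteq> -10 \<and> a \<noteq> -11 \<and>
        (\<forall>i. Suc J \<le> i \<and> i < n \<longrightarrow> (\<forall>p\<le>m. a \<noteq> gaddr m i p)) \<longrightarrow> s1 a = s a"
     "\<forall>i. Suc J \<le> i \<and> i < n \<longrightarrow> (\<forall>p\<le>m. entok n m v x i p (s1 (gaddr m i p)))"
  shows "wp agentbody s1 (\<lambda>t s3. t \<le> 5 + (m+1)*(11*m+17) \<and> s3 (-6) = int J \<and> s3 (-10) = gaddr m J 0
     \<and> s3 (-11) = 2 + int (J * m) \<and>
     (\<forall>a. a \<noteq> -6 \<and> a \<noteq> -7 \<and> a \<noteq> -8 \<and> a \<noteq> -9 \<and> a \<noteq> -10 \<and> a \<noteq> -11 \<and>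
        (\<forall>i. J \<le> i \<and> i < n \<longrightarrow> (\<forall>p\<le>m. a \<noteq> gaddr m i p)) \<longrightarrow> s3 a = s a) \<and>
     (\<forall>i. J \<le> i \<and> i < n \<longrightarrow> (\<forall>p\<le>m. entok n m v x i p (s3 (gaddr m i p)))))"
proof -
  have sv: "s1 (-2) = int m" "s1 (-3) = int m + 1" "s1 (-4) = int x" using s s1(4) by simp_all
  define s2 where "s2 = s1(-6 := int J, -10 := gaddr m J 0, -11 := 2 + int (J * m), -7 := 0)"
  have g1: "s2 A = s A" if "0 \<le> A" for A
  proof -
    have "s2 A = s1 A" using that unfolding s2_def by simp
    also have "\<dots> = s A" by (rule s1(4)[rule_format]) (use that in auto)
    finally show ?thesis .
  qed
  have Jn: "J < n" using J by simp
  have h_inp: "\<forall>q<m. s2 (2 + int(J*m) + int q) = int (v J q)"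
  proof (intro allI impI)
    fix q assume q: "q < m"
    have "s2 (2 + int(J*m) + int q) = s (2 + int(J*m) + int q)" by (rule g1) simp
    then show "s2 (2 + int(J*m) + int q) = int (v J q)" using inp Jn q by simp
  qed
  have h_row: "\<forall>q\<le>m. 0 \<le> s2 (gaddr m (Suc J) q) \<and> (s2 (gaddr m (Suc J) q) \<noteq> 0 \<longleftrightarrow> good n m v x (Suc J) q)"
  proof (intro allI impI)
    fix q assume q: "q \<le> m"
    have e2: "s2 (gaddr m (Suc J) q) = s1 (gaddr m (Suc J) q)" unfolding s2_def by simp
    show "0 \<le> s2 (gaddr m (Suc J) q) \<and> (s2 (gaddr m (Suc J) q) \<noteq> 0 \<longleftrightarrow> good n m v x (Suc J) q)"
    proof (cases "Suc J = n")
      case True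
      have ne: "gaddr m n q \<noteq> gaddr m i p" if "i < n" "p \<le> m" for i p using gaddr_inj[OF q that(2), of n i] that by auto
      have "s1 (gaddr m n q) = s (gaddr m n q)" by (rule s1(4)[rule_format]) (use ne in auto)
      then show ?thesis using e2 rown q True good_n[of n m v x q] by auto
    next
      case False
      then have "entok n m v x (Suc J) q (s1 (gaddr m (Suc J) q))" using s1(5) J q by simp
      then show ?thesis using e2 unfolding entok_def by simp
    qed
  qed
  have stp: "gaddr m (Suc J) 0 + (int m + 1) = gaddr m J 0" by simp
  show ?thesis
    unfolding agentbody_def
    apply (rule wp_store_seq)+
    apply (rule wp_eqI[where st = s2])
    defer
    apply (simp add: s2_def sv s1 stp)
    apply (rule ploop_spec[where n=n and m=m and v=v and x=x and I=J])
    using sv apply (simp_all add: s2_def Jn)[6]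
    using h_inp apply simp
    using h_row apply simp
  proof -
    fix t s3
    assume A: "t \<le> (m + 1) * (11 * m + 17) + 1"
      and B: "\<forall>a. a \<noteq> - 7 \<and> a \<noteq> - 8 \<and> a \<noteq> - 9 \<and> (\<forall>p\<le>m. a \<noteq> gaddr m J p) \<longrightarrow> s3 a = s2 a"
      and C: "\<forall>p\<le>m. entok n m v x J p (s3 (gaddr m J p))"
    have v: "s3 (-6) = int J" "s3 (-10) = gaddr m J 0" "s3 (-11) = 2 + int (J * m)"
      using B by (simp_all add: s2_def)
    have fr: "\<forall>a. a \<noteq> -6 \<and> a \<noteq> -7 \<and> a \<noteq> -8 \<and> a \<noteq> -9 \<and> a \<noteq> -10 \<and> a \<noteq> -11 \<and>
        (\<forall>i. J \<le> i \<and> i < n \<longrightarrow> (\<forall>p\<le>m. a \<noteq> gaddr m i p)) \<longrightarrow> s3 a = s a"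
    proof (intro allI impI)
      fix a assume a: "a \<noteq> -6 \<and> a \<noteq> -7 \<and> a \<noteq> -8 \<and> a \<noteq> -9 \<and> a \<noteq> -10 \<and> a \<noteq> -11 \<and>
        (\<forall>i. J \<le> i \<and> i < n \<longrightarrow> (\<forall>p\<le>m. a \<noteq> gaddr m i p))"
      have "s3 a = s2 a" using B a Jn by auto
      also have "\<dots> = s1 a" using a unfolding s2_def by simp
      also have "\<dots> = s a" using s1(4) a by auto
      finally show "s3 a = s a" .
    qed
    have en: "\<forall>i. J \<le> i \<and> i < n \<longrightarrow> (\<forall>p\<le>m. entok n m v x i p (s3 (gaddr m i p)))"
    proof (intro allI impI)
      fix i p assume i: "J \<le> i \<and> i < n" and p: "p \<le> m"
      show "entok n m v x i p (s3 (gaddr m i p))"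
      proof (cases "i = J")
        case True then show ?thesis using C p by simp
      next
        case False
        have ne: "gaddr m i p \<noteq> gaddr m J p'" if "p' \<le> m" for p' using gaddr_inj[OF p that, of i J] False by simp
        have "s3 (gaddr m i p) = s2 (gaddr m i p)" using B ne by simp
        also have "\<dots> = s1 (gaddr m i p)" unfolding s2_def by simp
        finally show ?thesis using s1(5) i p False by simp
      qed
    qed
    show "Suc (Suc (Suc (Suc t))) \<le> 5 + (m + 1) * (11 * m + 17) \<and>
           s3 (- 6) = int J \<and> s3 (- 10) = gaddr m J 0 \<and> s3 (- 11) = 2 + int (J * m) \<and>
           (\<forall>a. a \<noteq> - 6 \<and> a \<noteq> - 7 \<and> a \<noteq> - 8 \<and> a \<noteq> - 9 \<and> a \<noteq> - 10 \<and>
                a \<noteq> - 11 \<and> (\<forall>i. J \<le> i \<and> i < n \<longrightarrow> (\<forall>p\<le>m. a \<noteq> gaddr m i p)) \<longrightarrow>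
                s3 a = s a) \<and>
           (\<forall>i. J \<le> i \<and> i < n \<longrightarrow> (\<forall>p\<le>m. entok n m v x i p (s3 (gaddr m i p))))"
      using A v fr en by simp
  qed
qed

lemma aloop_spec:
  assumes s: "s (-2) = int m" "s (-3) = int m + 1" "s (-4) = int x"
   and inp: "\<forall>i<n. \<forall>q<m. s (2 + int(i*m) + int q) = int (v i q)"
   and rown: "\<forall>p\<le>m. s (gaddr m n p) = (if p = m then 1 else 0)"
   and s0: "s (-6) = int n" "s (-10) = gaddr m n 0" "s (-11) = 2 + int (n * m)"
   and post: "\<And>t s'. t \<le> n * (6 + (m+1)*(11*m+17)) + 1 \<Longrightarrow>
     (\<forall>a. a \<noteq> -6 \<and> a \<noteq> -7 \<and> a \<noteq> -8 \<and> a \<noteq> -9 \<and> a \<noteq> -10 \<and> a \<noteq> -11 \<and>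
        (\<forall>i<n. \<forall>p\<le>m. a \<noteq> gaddr m i p) \<longrightarrow> s' a = s a) \<Longrightarrow>
     (\<forall>i<n. \<forall>p\<le>m. entok n m v x i p (s' (gaddr m i p))) \<Longrightarrow> Q t s'"
  shows "wp aloop s Q"
  unfolding aloop_def
proof (rule wp_while[where Inv = "\<lambda>k s1. k \<le> n \<and> s1 (-6) = int k \<and> s1 (-10) = gaddr m k 0 \<and> s1 (-11) = 2 + int (k * m) \<and>
     (\<forall>a. a \<noteq> -6 \<and> a \<noteq> -7 \<and> a \<noteq> -8 \<and> a \<noteq> -9 \<and> a \<noteq> -10 \<and> a \<noteq> -11 \<and>
        (\<forall>i. k \<le> i \<and> i < n \<longrightarrow> (\<forall>p\<le>m. a \<noteq> gaddr m i p)) \<longrightarrow> s1 a = s a) \<and>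
     (\<forall>i. k \<le> i \<and> i < n \<longrightarrow> (\<forall>p\<le>m. entok n m v x i p (s1 (gaddr m i p))))" and k = n
     and B = "5 + (m+1)*(11*m+17)"])
  show "n \<le> n \<and> s (-6) = int n \<and> s (-10) = gaddr m n 0 \<and> s (-11) = 2 + int (n * m) \<and>
     (\<forall>a. a \<noteq> -6 \<and> a \<noteq> -7 \<and> a \<noteq> -8 \<and> a \<noteq> -9 \<and> a \<noteq> -10 \<and> a \<noteq> -11 \<and>
        (\<forall>i. n \<le> i \<and> i < n \<longrightarrow> (\<forall>p\<le>m. a \<noteq> gaddr m i p)) \<longrightarrow> s a = s a) \<and>
     (\<forall>i. n \<le> i \<and> i < n \<longrightarrow> (\<forall>p\<le>m. entok n m v x i p (s (gaddr m i p))))"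
    using s0 by auto
next
  fix k s1
  assume "k \<le> n \<and> s1 (-6) = int k \<and> s1 (-10) = gaddr m k 0 \<and> s1 (-11) = 2 + int (k * m) \<and>
     (\<forall>a. a \<noteq> -6 \<and> a \<noteq> -7 \<and> a \<noteq> -8 \<and> a \<noteq> -9 \<and> a \<noteq> -10 \<and> a \<noteq> -11 \<and>
        (\<forall>i. k \<le> i \<and> i < n \<longrightarrow> (\<forall>p\<le>m. a \<noteq> gaddr m i p)) \<longrightarrow> s1 a = s a) \<and>
     (\<forall>i. k \<le> i \<and> i < n \<longrightarrow> (\<forall>p\<le>m. entok n m v x i p (s1 (gaddr m i p))))"
  then show "0 < eval (V (-6)) s1 \<longleftrightarrow> 0 < k" by simp
next
  fix k s1
  assume A: "Suc k \<le> n \<and> s1 (-6) = int (Suc k) \<and> s1 (-10) = gaddr m (Suc k) 0 \<and> s1 (-11) = 2 + int (Suc k * m) \<and>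
     (\<forall>a. a \<noteq> -6 \<and> a \<noteq> -7 \<and> a \<noteq> -8 \<and> a \<noteq> -9 \<and> a \<noteq> -10 \<and> a \<noteq> -11 \<and>
        (\<forall>i. Suc k \<le> i \<and> i < n \<longrightarrow> (\<forall>p\<le>m. a \<noteq> gaddr m i p)) \<longrightarrow> s1 a = s a) \<and>
     (\<forall>i. Suc k \<le> i \<and> i < n \<longrightarrow> (\<forall>p\<le>m. entok n m v x i p (s1 (gaddr m i p))))"
  show "wp agentbody s1 (\<lambda>t s'. t \<le> 5 + (m+1)*(11*m+17) \<and> (\<exists>k'\<le>k. k' \<le> n \<and> s' (-6) = int k' \<and> s' (-10) = gaddr m k' 0 \<and> s' (-11) = 2 + int (k' * m) \<and>
     (\<forall>a. a \<noteq> -6 \<and> a \<noteq> -7 \<and> a \<noteq> -8 \<and> a \<noteq> -9 \<and> a \<noteq> -10 \<and> a \<noteq> -11 \<and>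
        (\<forall>i. k' \<le> i \<and> i < n \<longrightarrow> (\<forall>p\<le>m. a \<noteq> gaddr m i p)) \<longrightarrow> s' a = s a) \<and>
     (\<forall>i. k' \<le> i \<and> i < n \<longrightarrow> (\<forall>p\<le>m. entok n m v x i p (s' (gaddr m i p))))))"
  proof (rule wp_mono[OF abody_step[OF s inp rown, of k s1]])
    show "Suc k \<le> n" "s1 (-6) = int (Suc k)" "s1 (-10) = gaddr m (Suc k) 0" "s1 (-11) = 2 + int (Suc k * m)"
      using A by blast+
    show "\<forall>a. a \<noteq> -6 \<and> a \<noteq> -7 \<and> a \<noteq> -8 \<and> a \<noteq> -9 \<and> a \<noteq> -10 \<and> a \<noteq> -11 \<and>
        (\<forall>i. Suc k \<le> i \<and> i < n \<longrightarrow> (\<forall>p\<le>m. a \<noteq> gaddr m i p)) \<longrightarrow> s1 a = s a"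
      "\<forall>i. Suc k \<le> i \<and> i < n \<longrightarrow> (\<forall>p\<le>m. entok n m v x i p (s1 (gaddr m i p)))"
      using A by blast+
    have kn: "k \<le> n" using A by simp
    fix t s3
    assume "t \<le> 5 + (m+1)*(11*m+17) \<and> s3 (-6) = int k \<and> s3 (-10) = gaddr m k 0
     \<and> s3 (-11) = 2 + int (k * m) \<and>
     (\<forall>a. a \<noteq> -6 \<and> a \<noteq> -7 \<and> a \<noteq> -8 \<and> a \<noteq> -9 \<and> a \<noteq> -10 \<and> a \<noteq> -11 \<and>
        (\<forall>i. k \<le> i \<and> i < n \<longrightarrow> (\<forall>p\<le>m. a \<noteq> gaddr m i p)) \<longrightarrow> s3 a = s a) \<and>
     (\<forall>i. k \<le> i \<and> i < n \<longrightarrow> (\<forall>p\<le>m. entok n m v x i p (s3 (gaddr m i p))))"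
    then show "t \<le> 5 + (m+1)*(11*m+17) \<and> (\<exists>k'\<le>k. k' \<le> n \<and> s3 (-6) = int k' \<and> s3 (-10) = gaddr m k' 0 \<and> s3 (-11) = 2 + int (k' * m) \<and>
     (\<forall>a. a \<noteq> -6 \<and> a \<noteq> -7 \<and> a \<noteq> -8 \<and> a \<noteq> -9 \<and> a \<noteq> -10 \<and> a \<noteq> -11 \<and>
        (\<forall>i. k' \<le> i \<and> i < n \<longrightarrow> (\<forall>p\<le>m. a \<noteq> gaddr m i p)) \<longrightarrow> s3 a = s a) \<and>
     (\<forall>i. k' \<le> i \<and> i < n \<longrightarrow> (\<forall>p\<le>m. entok n m v x i p (s3 (gaddr m i p)))))"
      using kn by blast
  qed
next
  fix t s'
  assume "0 \<le> n \<and> s' (-6) = int 0 \<and> s' (-10) = gaddr m 0 0 \<and> s' (-11) = 2 + int (0 * m) \<and>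
     (\<forall>a. a \<noteq> -6 \<and> a \<noteq> -7 \<and> a \<noteq> -8 \<and> a \<noteq> -9 \<and> a \<noteq> -10 \<and> a \<noteq> -11 \<and>
        (\<forall>i. 0 \<le> i \<and> i < n \<longrightarrow> (\<forall>p\<le>m. a \<noteq> gaddr m i p)) \<longrightarrow> s' a = s a) \<and>
     (\<forall>i. 0 \<le> i \<and> i < n \<longrightarrow> (\<forall>p\<le>m. entok n m v x i p (s' (gaddr m i p))))"
    "t \<le> n * (5 + (m+1)*(11*m+17) + 1) + 1"
  then show "Q t s'" using post[of t s'] by (simp add: add.commute)
qed

definition rbody :: com where
"rbody = Seq (Store (Add (Const 1) (V (-6))) (V (-7))) (Seq (Store (Const (-7)) (Sub (Load (Sub (V (-10)) (V (-7)))) (Const 1)))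
   (Seq (Store (Const (-10)) (Sub (V (-10)) (V (-3)))) (Store (Const (-6)) (Add (V (-6)) (Const 1)))))"

definition rloop :: com where
  "rloop = WhilePos (Sub (Add (V (-1)) (Const 1)) (V (-6))) rbody"

lemma rbody_step:
  assumes "s1 (-6) = int I" "s1 (-7) = int P" "s1 (-10) = gaddr m I 0" "s1 (-3) = int m + 1"
  shows "wp rbody s1 (\<lambda>t s'. t \<le> 4 \<and> s' = s1(1 + int I := int P, -7 := s1 (gaddr m I P) - 1,
     -10 := gaddr m (Suc I) 0, -6 := int I + 1))"
  unfolding rbody_def
  apply (intro wp_seq wp_store)
  using assms apply simp
  done

lemma rloop_spec:
  fixes G :: "nat \<Rightarrow> nat \<Rightarrow> int"
  assumes s: "s (-1) = int n" "s (-3) = int m + 1" "s (-6) = 0" "s (-7) = 0" "s (-10) = gaddr m 0 0"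
   and G: "G = (\<lambda>i p. s (gaddr m i p))"
   and kp: "\<forall>j\<le>n. kseq G j \<le> m \<and> 1 \<le> G j (kseq G j)"
   and post: "\<And>t s'. t \<le> (n+1)*5+1 \<Longrightarrow> (\<forall>j\<le>n. s' (1 + int j) = int (kseq G j)) \<Longrightarrow>
     (\<forall>a. a \<noteq> -6 \<and> a \<noteq> -7 \<and> a \<noteq> -10 \<and> (\<forall>j\<le>n. a \<noteq> 1 + int j) \<longrightarrow> s' a = s a) \<Longrightarrow> Q t s'"
  shows "wp rloop s Q"
  unfolding rloop_def
proof (rule wp_while[where Inv = "\<lambda>k s1. \<exists>I. I + k = n+1 \<and> s1 (-6) = int I \<and> s1 (-7) = int (kseq G I)
    \<and> s1 (-10) = gaddr m I 0 \<and> (\<forall>j<I. s1 (1 + int j) = int (kseq G j)) \<and>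
    (\<forall>a. a \<noteq> -6 \<and> a \<noteq> -7 \<and> a \<noteq> -10 \<and> (\<forall>j<I. a \<noteq> 1 + int j) \<longrightarrow> s1 a = s a)" and k = "n+1" and B = 4])
  show "\<exists>I. I + (n+1) = n+1 \<and> s (-6) = int I \<and> s (-7) = int (kseq G I)
    \<and> s (-10) = gaddr m I 0 \<and> (\<forall>j<I. s (1 + int j) = int (kseq G j)) \<and>
    (\<forall>a. a \<noteq> -6 \<and> a \<noteq> -7 \<and> a \<noteq> -10 \<and> (\<forall>j<I. a \<noteq> 1 + int j) \<longrightarrow> s a = s a)"
    using s by (intro exI[of _ 0]) simp
next
  fix k s1
  assume "\<exists>I. I + k = n+1 \<and> s1 (-6) = int I \<and> s1 (-7) = int (kseq G I)
    \<and> s1 (-10) = gaddr m I 0 \<and> (\<forall>j<I. s1 (1 + int j) = int (kseq G j)) \<and>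
    (\<forall>a. a \<noteq> -6 \<and> a \<noteq> -7 \<and> a \<noteq> -10 \<and> (\<forall>j<I. a \<noteq> 1 + int j) \<longrightarrow> s1 a = s a)"
  then obtain I where I: "I + k = n+1" "s1 (-6) = int I"
    "\<forall>a. a \<noteq> -6 \<and> a \<noteq> -7 \<and> a \<noteq> -10 \<and> (\<forall>j<I. a \<noteq> 1 + int j) \<longrightarrow> s1 a = s a" by blast
  have "s1 (-1) = int n" using I(3) s by simp
  then show "0 < eval (Sub (Add (V (-1)) (Const 1)) (V (-6))) s1 \<longleftrightarrow> 0 < k" using I by (simp; linarith)
next
  fix k s1
  assume "\<exists>I. I + Suc k = n+1 \<and> s1 (-6) = int I \<and> s1 (-7) = int (kseq G I)
    \<and> s1 (-10) = gaddr m I 0 \<and> (\<forall>j<I. s1 (1 + int j) = int (kseq G j)) \<and>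
    (\<forall>a. a \<noteq> -6 \<and> a \<noteq> -7 \<and> a \<noteq> -10 \<and> (\<forall>j<I. a \<noteq> 1 + int j) \<longrightarrow> s1 a = s a)"
  then obtain I where I: "I + Suc k = n+1" "s1 (-6) = int I" "s1 (-7) = int (kseq G I)"
    "s1 (-10) = gaddr m I 0" "\<forall>j<I. s1 (1 + int j) = int (kseq G j)"
    "\<forall>a. a \<noteq> -6 \<and> a \<noteq> -7 \<and> a \<noteq> -10 \<and> (\<forall>j<I. a \<noteq> 1 + int j) \<longrightarrow> s1 a = s a" by blast
  have In: "I \<le> n" using I(1) by simp
  have m3: "s1 (-3) = int m + 1" using I(6) s by simp
  have kI: "kseq G I \<le> m" "1 \<le> G I (kseq G I)" using kp In by auto
  have rd: "s1 (gaddr m I (kseq G I)) = G I (kseq G I)"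
  proof -
    have "s1 (gaddr m I (kseq G I)) = s (gaddr m I (kseq G I))"
      by (rule I(6)[rule_format]) (use gaddr_le[of m I "kseq G I"] in auto)
    then show ?thesis using G by simp
  qed
  have nx: "G I (kseq G I) - 1 = int (kseq G (Suc I))" using kI(2) by simp
  show "wp rbody s1 (\<lambda>t s'. t \<le> 4 \<and> (\<exists>k'\<le>k. \<exists>I. I + k' = n+1 \<and> s' (-6) = int I \<and> s' (-7) = int (kseq G I)
    \<and> s' (-10) = gaddr m I 0 \<and> (\<forall>j<I. s' (1 + int j) = int (kseq G j)) \<and>
    (\<forall>a. a \<noteq> -6 \<and> a \<noteq> -7 \<and> a \<noteq> -10 \<and> (\<forall>j<I. a \<noteq> 1 + int j) \<longrightarrow> s' a = s a)))"
  proof (rule wp_mono[OF rbody_step[OF I(2) I(3) I(4) m3]])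
    fix t s2
    assume A: "t \<le> 4 \<and> s2 = s1(1 + int I := int (kseq G I), -7 := s1 (gaddr m I (kseq G I)) - 1,
     -10 := gaddr m (Suc I) 0, -6 := int I + 1)"
    have s2: "s2 = s1(1 + int I := int (kseq G I), -7 := s1 (gaddr m I (kseq G I)) - 1,
     -10 := gaddr m (Suc I) 0, -6 := int I + 1)" using A by blast
    have 1: "Suc I + k = n+1" "s2 (-6) = int (Suc I)" "s2 (-7) = int (kseq G (Suc I))" "s2 (-10) = gaddr m (Suc I) 0"
    proof -
      show "Suc I + k = n+1" using I(1) by simp
      show "s2 (-6) = int (Suc I)" using s2 by simp
      have "s2 (-7) = s1 (gaddr m I (kseq G I)) - 1" using s2 by simp
      then show "s2 (-7) = int (kseq G (Suc I))" using rd nx by (simp only:)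
      show "s2 (-10) = gaddr m (Suc I) 0" using s2 by simp
    qed
    have 2: "\<forall>j<Suc I. s2 (1 + int j) = int (kseq G j)"
    proof (intro allI impI)
      fix j assume "j < Suc I"
      then show "s2 (1 + int j) = int (kseq G j)"
      proof (cases "j = I")
        case True then show ?thesis using s2 by simp
      next
        case False
        then have "j < I" using \<open>j < Suc I\<close> by simp
        have "s2 (1 + int j) = s1 (1 + int j)" using s2 False by simp
        then show ?thesis using I(5) \<open>j < I\<close> by simp
      qed
    qed
    have 3: "\<forall>a. a \<noteq> -6 \<and> a \<noteq> -7 \<and> a \<noteq> -10 \<and> (\<forall>j<Suc I. a \<noteq> 1 + int j) \<longrightarrow> s2 a = s a"
    proof (intro allI impI)
      fix a assume a: "a \<noteq> -6 \<and> a \<noteq> -7 \<and> a \<noteq> -10 \<and> (\<forall>j<Suc I. a \<noteq> 1 + int j)"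
      then have "a \<noteq> 1 + int I" by blast
      then have "s2 a = s1 a" using s2 a by simp
      also have "\<dots> = s a" using I(6) a by simp
      finally show "s2 a = s a" .
    qed
    show "t \<le> 4 \<and> (\<exists>k'\<le>k. \<exists>I. I + k' = n+1 \<and> s2 (-6) = int I \<and> s2 (-7) = int (kseq G I)
    \<and> s2 (-10) = gaddr m I 0 \<and> (\<forall>j<I. s2 (1 + int j) = int (kseq G j)) \<and>
    (\<forall>a. a \<noteq> -6 \<and> a \<noteq> -7 \<and> a \<noteq> -10 \<and> (\<forall>j<I. a \<noteq> 1 + int j) \<longrightarrow> s2 a = s a))"
      using A 1 2 3 by blast
  qed
next
  fix t s'
  assume "\<exists>I. I + 0 = n+1 \<and> s' (-6) = int I \<and> s' (-7) = int (kseq G I)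
    \<and> s' (-10) = gaddr m I 0 \<and> (\<forall>j<I. s' (1 + int j) = int (kseq G j)) \<and>
    (\<forall>a. a \<noteq> -6 \<and> a \<noteq> -7 \<and> a \<noteq> -10 \<and> (\<forall>j<I. a \<noteq> 1 + int j) \<longrightarrow> s' a = s a)"
    and t: "t \<le> (n+1)*(4+1)+1"
  then obtain I where I: "I = n+1" "\<forall>j<I. s' (1 + int j) = int (kseq G j)"
    "\<forall>a. a \<noteq> -6 \<and> a \<noteq> -7 \<and> a \<noteq> -10 \<and> (\<forall>j<I. a \<noteq> 1 + int j) \<longrightarrow> s' a = s a" by simp
  show "Q t s'"
  proof (rule post)
    show "t \<le> (n+1)*5+1" using t by simp
    show "\<forall>j\<le>n. s' (1 + int j) = int (kseq G j)" using I by (simp add: less_Suc_eq_le)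
    show "\<forall>a. a \<noteq> -6 \<and> a \<noteq> -7 \<and> a \<noteq> -10 \<and> (\<forall>j\<le>n. a \<noteq> 1 + int j) \<longrightarrow> s' a = s a"
      using I by (simp add: less_Suc_eq_le)
  qed
qed



definition recon :: com where
"recon = Seq (Store (Const (-7)) (Const 0)) (Seq (Store (Const (-6)) (Const 0))
   (Seq (Store (Const (-10)) (Const (-100))) rloop))"

definition ctail :: com where
"ctail = IfPos (Load (Const (-100)))
     (Seq recon (Seq (Store (Const (-12)) (Const 1)) (Store (Const (-5)) (V (-3)))))
     (Seq (Store (Const (-4)) (Add (V (-4)) (Load (Add (Const 2) (V (-5))))))
          (Store (Const (-5)) (Add (V (-5)) (Const 1))))"

definition cbody :: com where
"cbody = Seq (Store (Const (-6)) (V (-1))) (Seq (Store (Const (-10)) (V (-13)))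
  (Seq (Store (Const (-11)) (V (-15))) (Seq aloop ctail)))"

definition cloop :: com where
  "cloop = WhilePos (Sub (V (-3)) (V (-5))) cbody"

definition keepset :: "nat \<Rightarrow> nat \<Rightarrow> int set" where
  "keepset m n = {-1,-2,-3,-13,-15} \<union> {a. 0 \<le> a} \<union> (gaddr m n ` {..m})"

definition glob :: "nat \<Rightarrow> nat \<Rightarrow> (nat\<Rightarrow>nat\<Rightarrow>nat) \<Rightarrow> (int \<Rightarrow> int) \<Rightarrow> bool" where
  "glob n m v s \<longleftrightarrow> s (-1) = int n \<and> s (-2) = int m \<and> s (-3) = int m + 1 \<and> s (-13) = gaddr m n 0
    \<and> s (-15) = 2 + int (n*m) \<and> (\<forall>i<n. \<forall>q<m. s (2 + int(i*m) + int q) = int (v i q))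
    \<and> (\<forall>p\<le>m. s (gaddr m n p) = (if p = m then 1 else 0))"

lemma keep_glob:
  assumes "glob n m v s0" "\<forall>a\<in>keepset m n. s a = s0 a"
  shows "glob n m v s"
proof -
  have k: "s a = s0 a" if "a \<in> keepset m n" for a using assms(2) that by blast
  have "s (2 + int(i*m) + int q) = s0 (2 + int(i*m) + int q)" for i q
    by (rule k) (simp add: keepset_def)
  moreover have "s (gaddr m n p) = s0 (gaddr m n p)" if "p \<le> m" for p
    by (rule k) (use that in \<open>simp add: keepset_def\<close>)
  moreover have "s (-1) = s0 (-1)" "s (-2) = s0 (-2)" "s (-3) = s0 (-3)" "s (-13) = s0 (-13)" "s (-15) = s0 (-15)"
    by (rule k, simp add: keepset_def)+
  ultimately show ?thesis using assms(1) unfolding glob_def by simp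
qed

lemma keep_ne:
  assumes "a \<in> keepset m n"
  shows "a \<noteq> -4 \<and> a \<noteq> -5 \<and> a \<noteq> -6 \<and> a \<noteq> -7 \<and> a \<noteq> -8 \<and> a \<noteq> -9 \<and> a \<noteq> -10 \<and> a \<noteq> -11
     \<and> a \<noteq> -12 \<and> a \<noteq> -14 \<and> (\<forall>i<n. \<forall>p\<le>m. a \<noteq> gaddr m i p)"
  using assms unfolding keepset_def
proof (elim UnE)
  assume "a \<in> gaddr m n ` {..m}"
  then obtain q where q: "q \<le> m" "a = gaddr m n q" by auto
  have "\<forall>i<n. \<forall>p\<le>m. a \<noteq> gaddr m i p" using q gaddr_inj[of q m] by auto
  then show ?thesis using q by simp
qed auto

lemma gaddr00: "gaddr m 0 0 = -100" unfolding gaddr_def by simp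

definition CIA :: "nat \<Rightarrow> nat \<Rightarrow> (nat\<Rightarrow>nat\<Rightarrow>nat) \<Rightarrow> (int \<Rightarrow> int) \<Rightarrow> nat \<Rightarrow> (int \<Rightarrow> int) \<Rightarrow> bool" where
  "CIA n m v s0 C s1 \<longleftrightarrow> s1 (-5) = int C \<and> (C \<le> m \<longrightarrow> s1 (-4) = int (Ssum v 0 0 C)) \<and> s1 (-12) = 0
    \<and> (\<forall>c<C. \<not> good n m v (Ssum v 0 0 c) 0 0) \<and> (\<forall>a\<in>keepset m n. s1 a = s0 a)"

definition CIB :: "nat \<Rightarrow> nat \<Rightarrow> (nat\<Rightarrow>nat\<Rightarrow>nat) \<Rightarrow> (int \<Rightarrow> int) \<Rightarrow> bool" where
  "CIB n m v s1 \<longleftrightarrow> s1 (-12) = 1 \<and> s1 (-5) = int m + 1 \<and> s1 (-3) = int m + 1 \<and>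
    (\<exists>kk. occ n m kk \<and> equitable n v kk \<and> (\<forall>j\<le>n. s1 (1 + int j) = int (kk j)))"

lemma ctail_step:
  assumes g: "glob n m v s0" and n1: "1 \<le> n" and Cm: "C \<le> m" and x: "x = Ssum v 0 0 C"
   and s3: "s3 (-1) = int n" "s3 (-3) = int m + 1" "s3 (-4) = int x" "s3 (-5) = int C" "s3 (-12) = 0"
     "\<forall>c<C. \<not> good n m v (Ssum v 0 0 c) 0 0" "\<forall>a\<in>keepset m n. s3 a = s0 a"
   and ent: "\<forall>i<n. \<forall>p\<le>m. entok n m v x i p (s3 (gaddr m i p))"
  shows "wp ctail s3 (\<lambda>t s'. t \<le> 6 + ((n+1)*5+1) \<and> (CIA n m v s0 (Suc C) s' \<or> CIB n m v s'))"
proof -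
  define G where "G = (\<lambda>i p. s3 (gaddr m i p))"
  have gl: "glob n m v s3" using keep_glob[OF g s3(7)] .
  have rows: "\<forall>i\<le>n. rowok n m v x G i"
  proof (intro allI impI)
    fix i assume i: "i \<le> n"
    show "rowok n m v x G i"
    proof (cases "i = n")
      case True
      have "\<forall>p\<le>m. G n p = (if p = m then 1 else 0)" using gl unfolding glob_def G_def by simp
      then show ?thesis using True rown_entok_like by blast
    next
      case False
      then have "i < n" using i by simp
      then show ?thesis using entok_rows(1)[of m n v x i G] ent unfolding G_def by simp
    qed
  qed
  have ptrs: "\<forall>i<n. ptrok n m v x G i"
    using entok_rows(2)[of m n v x _ G] ent unfolding G_def by simp
  have r0: "0 \<le> G 0 0 \<and> (G 0 0 \<noteq> 0 \<longleftrightarrow> good n m v x 0 0)" using rows unfolding rowok_def by simp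
  have e100: "s3 (-100) = G 0 0" unfolding G_def gaddr00 by simp
  show ?thesis
    unfolding ctail_def
  proof (rule wp_if)
    assume "0 < eval (Load (Const (-100))) s3"
    then have g0: "good n m v x 0 0" using e100 r0 by simp
    note kp0 = kseq_props[OF rows ptrs g0]
    have kp: "\<forall>j\<le>n. kseq G j \<le> m \<and> 1 \<le> G j (kseq G j)" using kp0 by blast
    define s4 where "s4 = s3(-7 := 0, -6 := 0, -10 := -100)"
    have G4: "G = (\<lambda>i p. s4 (gaddr m i p))" unfolding G_def s4_def by (simp add: fun_eq_iff)
    show "wp (Seq recon (Seq (Store (Const (-12)) (Const 1)) (Store (Const (-5)) (V (-3))))) s3
       (\<lambda>t. (\<lambda>t s'. t \<le> 6 + ((n+1)*5+1) \<and> (CIA n m v s0 (Suc C) s' \<or> CIB n m v s')) (Suc t))"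
      unfolding recon_def
      apply (rule wp_seq)
      apply (rule wp_store_seq)+
      apply (rule wp_eqI[where st = s4])
       defer
       apply (simp add: s4_def)
      apply (rule rloop_spec[where n=n and m=m and G=G])
      using s3 apply (simp_all add: s4_def gaddr00 G4)[6]
      using kp apply (simp add: G_def)
    proof -
      fix t s5
      assume t: "t \<le> (n + 1) * 5 + 1" and o5: "\<forall>j\<le>n. s5 (1 + int j) = int (kseq G j)"
        and f5: "\<forall>a. a \<noteq> - 6 \<and> a \<noteq> - 7 \<and> a \<noteq> - 10 \<and> (\<forall>j\<le>n. a \<noteq> 1 + int j) \<longrightarrow> s5 a = s4 a"
      have m5: "s5 (-3) = int m + 1" using f5 s3 unfolding s4_def by simp
      define s6 where "s6 = s5(-12 := 1, -5 := int m + 1)"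
      have al: "occ n m (kseq G) \<and> equitable n v (kseq G)" using kseq_alloc[OF rows ptrs g0] by blast
      have "CIB n m v s6" unfolding CIB_def
      proof (intro conjI exI[of _ "kseq G"])
        show "s6 (-12) = 1" "s6 (-5) = int m + 1" "s6 (-3) = int m + 1" using m5 unfolding s6_def by simp_all
        show "occ n m (kseq G)" "equitable n v (kseq G)" using al by blast+
        show "\<forall>j\<le>n. s6 (1 + int j) = int (kseq G j)" using o5 unfolding s6_def by simp
      qed
      then show "wp (Seq (Store (Const (- 12)) (Const 1)) (Store (Const (- 5)) (V (- 3)))) s5
         (\<lambda>t2 s2. Suc (Suc (Suc (Suc t)) + t2) \<le> 6 + ((n + 1) * 5 + 1) \<and>
                   (CIA n m v s0 (Suc C) s2 \<or> CIB n m v s2))"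
        apply (intro wp_seq wp_store)
        using t m5 by (simp add: s6_def)
    qed
  next
    assume "\<not> 0 < eval (Load (Const (-100))) s3"
    then have ng: "\<not> good n m v x 0 0" using e100 r0 by force
    show "wp (Seq (Store (Const (-4)) (Add (V (-4)) (Load (Add (Const 2) (V (-5))))))
          (Store (Const (-5)) (Add (V (-5)) (Const 1)))) s3
       (\<lambda>t. (\<lambda>t s'. t \<le> 6 + ((n+1)*5+1) \<and> (CIA n m v s0 (Suc C) s' \<or> CIB n m v s')) (Suc t))"
    proof -
      define s4 where "s4 = s3(-4 := int x + s3 (2 + int C), -5 := int C + 1)"
      have rdC: "s3 (2 + int C) = int (v 0 C)" if "C < m"
      proof -
        have i: "\<forall>i<n. \<forall>q<m. s3 (2 + int(i*m) + int q) = int (v i q)" using gl unfolding glob_def by blast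
        have "0 < n" using n1 by simp
        then have "s3 (2 + int (0*m) + int C) = int (v 0 C)" using i that by blast
        then show ?thesis by simp
      qed
      have "CIA n m v s0 (Suc C) s4" unfolding CIA_def
      proof (intro conjI)
        show "s4 (-5) = int (Suc C)" "s4 (-12) = 0" unfolding s4_def using s3 by simp_all
        show "Suc C \<le> m \<longrightarrow> s4 (-4) = int (Ssum v 0 0 (Suc C))"
          using rdC Ssum_Suc[of 0 C v 0] x unfolding s4_def by simp
        show "\<forall>c<Suc C. \<not> good n m v (Ssum v 0 0 c) 0 0" using s3(6) ng x by (auto simp: less_Suc_eq)
        show "\<forall>a\<in>keepset m n. s4 a = s0 a"
        proof
          fix a assume a: "a \<in> keepset m n"
          then have "a \<noteq> -4 \<and> a \<noteq> -5" using keep_ne[OF a] by blast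
          then have "s4 a = s3 a" unfolding s4_def by simp
          then show "s4 a = s0 a" using s3(7) a by simp
        qed
      qed
      then show ?thesis
        apply (intro wp_seq wp_store)
        using s3 by (simp add: s4_def)
    qed
  qed
qed

lemma cbody_step:
  assumes g: "glob n m v s0" and n1: "1 \<le> n" and Cm: "C \<le> m" and A: "CIA n m v s0 C s1"
  shows "wp cbody s1 (\<lambda>t s'. t \<le> 9 + (n * (6 + (m+1)*(11*m+17)) + 1) + ((n+1)*5+1) \<and>
     (CIA n m v s0 (Suc C) s' \<or> CIB n m v s'))"
proof -
  define x where "x = Ssum v 0 0 C"
  have A': "s1 (-5) = int C" "s1 (-4) = int x" "s1 (-12) = 0" "\<forall>c<C. \<not> good n m v (Ssum v 0 0 c) 0 0"
     "\<forall>a\<in>keepset m n. s1 a = s0 a" using A Cm unfolding CIA_def x_def by auto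
  have gl: "glob n m v s1" using keep_glob[OF g A'(5)] .
  then have gv: "s1 (-1) = int n" "s1 (-2) = int m" "s1 (-3) = int m + 1" "s1 (-13) = gaddr m n 0"
    "s1 (-15) = 2 + int (n*m)" "\<forall>i<n. \<forall>q<m. s1 (2 + int(i*m) + int q) = int (v i q)"
    "\<forall>p\<le>m. s1 (gaddr m n p) = (if p = m then 1 else 0)" unfolding glob_def by auto
  define s2 where "s2 = s1(-6 := int n, -10 := gaddr m n 0, -11 := 2 + int (n*m))"
  have s2k: "s2 a = s1 a" if "a \<in> keepset m n" for a using keep_ne[OF that] unfolding s2_def by simp
  have inp2: "\<forall>i<n. \<forall>q<m. s2 (2 + int(i*m) + int q) = int (v i q)"
    using gv(6) s2k unfolding keepset_def by simp
  have rown2: "\<forall>p\<le>m. s2 (gaddr m n p) = (if p = m then 1 else 0)"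
    using gv(7) s2k unfolding keepset_def by simp
  show ?thesis
    unfolding cbody_def
    apply (rule wp_store_seq)+
    apply (rule wp_eqI[where st = s2])
     defer
     apply (simp add: s2_def gv)
    apply (rule wp_seq)
    apply (rule aloop_spec[where n=n and m=m and v=v and x=x])
    using gv A' apply (simp_all add: s2_def)[3]
    using inp2 apply simp
    using rown2 apply simp
    apply (simp_all add: s2_def)[3]
  proof -
    fix t s3
    assume t: "t \<le> n * (6 + (m + 1) * (11 * m + 17)) + 1"
      and f3: "\<forall>a. a \<noteq> - 6 \<and> a \<noteq> - 7 \<and> a \<noteq> - 8 \<and> a \<noteq> - 9 \<and> a \<noteq> - 10 \<and> a \<noteq> - 11 \<and>
              (\<forall>i<n. \<forall>p\<le>m. a \<noteq> gaddr m i p) \<longrightarrow> s3 a = s2 a"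
      and e3: "\<forall>i<n. \<forall>p\<le>m. entok n m v x i p (s3 (gaddr m i p))"
    have k3: "\<forall>a\<in>keepset m n. s3 a = s0 a"
    proof
      fix a assume a: "a \<in> keepset m n"
      have "s3 a = s2 a" using f3 keep_ne[OF a] by simp
      then show "s3 a = s0 a" using s2k[OF a] A'(5) a by simp
    qed
    have v3: "s3 (-1) = int n" "s3 (-3) = int m + 1" "s3 (-4) = int x" "s3 (-5) = int C" "s3 (-12) = 0"
      using f3 A' gv unfolding s2_def by simp_all
    show "wp ctail s3 (\<lambda>t2 s'. Suc (Suc (Suc (t + t2))) \<le> 9 + (n * (6 + (m+1)*(11*m+17)) + 1) + ((n+1)*5+1) \<and>
         (CIA n m v s0 (Suc C) s' \<or> CIB n m v s'))"
      apply (rule wp_mono[OF ctail_step[OF g n1 Cm x_def v3 A'(4) k3 e3]])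
      using t by simp
  qed
qed

lemma cloop_spec:
  assumes g: "glob n m v s0" and n1: "1 \<le> n" and A: "CIA n m v s0 0 s"
   and post: "\<And>t s'. t \<le> (m+1)*(10 + (n * (6 + (m+1)*(11*m+17)) + 1) + ((n+1)*5+1)) + 1 \<Longrightarrow>
      CIA n m v s0 (m+1) s' \<or> CIB n m v s' \<Longrightarrow> Q t s'"
  shows "wp cloop s Q"
  unfolding cloop_def
proof (rule wp_while[where Inv = "\<lambda>k s1. (\<exists>C. C + k = m+1 \<and> CIA n m v s0 C s1) \<or> (k = 0 \<and> CIB n m v s1)"
     and k = "m+1" and B = "9 + (n * (6 + (m+1)*(11*m+17)) + 1) + ((n+1)*5+1)"])
  show "(\<exists>C. C + (m+1) = m+1 \<and> CIA n m v s0 C s) \<or> (m+1 = 0 \<and> CIB n m v s)" using A by auto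
next
  fix k s1
  assume "(\<exists>C. C + k = m+1 \<and> CIA n m v s0 C s1) \<or> (k = 0 \<and> CIB n m v s1)"
  then show "0 < eval (Sub (V (-3)) (V (-5))) s1 \<longleftrightarrow> 0 < k"
  proof
    assume "\<exists>C. C + k = m+1 \<and> CIA n m v s0 C s1"
    then obtain C where C: "C + k = m+1" "CIA n m v s0 C s1" by blast
    have "s1 (-3) = s0 (-3)" using C(2) unfolding CIA_def keepset_def by simp
    then have "s1 (-3) = int m + 1" using g unfolding glob_def by simp
    moreover have "s1 (-5) = int C" using C(2) unfolding CIA_def by simp
    ultimately show ?thesis using C(1) by (simp; linarith)
  next
    assume "k = 0 \<and> CIB n m v s1"
    then show ?thesis unfolding CIB_def by simp
  qed
next
  fix k s1
  assume "(\<exists>C. C + Suc k = m+1 \<and> CIA n m v s0 C s1) \<or> (Suc k = 0 \<and> CIB n m v s1)"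
  then obtain C where C: "C + Suc k = m+1" "CIA n m v s0 C s1" by auto
  have Cm: "C \<le> m" using C(1) by simp
  show "wp cbody s1 (\<lambda>t s'. t \<le> 9 + (n * (6 + (m+1)*(11*m+17)) + 1) + ((n+1)*5+1) \<and>
     (\<exists>k'\<le>k. (\<exists>C. C + k' = m+1 \<and> CIA n m v s0 C s') \<or> (k' = 0 \<and> CIB n m v s')))"
  proof (rule wp_mono[OF cbody_step[OF g n1 Cm C(2)]])
    fix t s' assume "t \<le> 9 + (n * (6 + (m+1)*(11*m+17)) + 1) + ((n+1)*5+1) \<and>
     (CIA n m v s0 (Suc C) s' \<or> CIB n m v s')"
    then show "t \<le> 9 + (n * (6 + (m+1)*(11*m+17)) + 1) + ((n+1)*5+1) \<and>
     (\<exists>k'\<le>k. (\<exists>C. C + k' = m+1 \<and> CIA n m v s0 C s') \<or> (k' = 0 \<and> CIB n m v s'))"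
    proof -
      have e: "Suc C + k = m+1" using C(1) by simp
      show ?thesis using \<open>t \<le> _ \<and> _\<close> e by blast
    qed
  qed
next
  fix t s'
  assume "(\<exists>C. C + 0 = m+1 \<and> CIA n m v s0 C s') \<or> (0 = (0::nat) \<and> CIB n m v s')"
    "t \<le> (m+1) * (9 + (n * (6 + (m+1)*(11*m+17)) + 1) + ((n+1)*5+1) + 1) + 1"
  then have d: "CIA n m v s0 (m+1) s' \<or> CIB n m v s'" and t: "t \<le> (m+1) * (9 + (n * (6 + (m+1)*(11*m+17)) + 1) + ((n+1)*5+1) + 1) + 1" by auto
  have t': "t \<le> (m+1)*(10 + (n * (6 + (m+1)*(11*m+17)) + 1) + ((n+1)*5+1)) + 1" using t by simp
  show "Q t s'" using post[OF t' d] .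
qed



lemma enc0: "enc n m v 0 = int n" unfolding enc_def by simp
lemma enc1: "enc n m v 1 = int m" unfolding enc_def by simp

lemma enc_neg:
  assumes "a < 0" shows "enc n m v a = 0"
proof -
  have h: "\<not> (\<exists>i<n. \<exists>g<m. a = 2 + int (i*m + g))"
  proof
    assume "\<exists>i<n. \<exists>g<m. a = 2 + int (i*m + g)"
    then obtain i g where "a = 2 + int (i*m + g)" by blast
    moreover have "0 \<le> int (i*m + g)" by (rule of_nat_0_le_iff)
    ultimately show False using assms by linarith
  qed
  show ?thesis unfolding enc_def using h assms by (simp only: if_False) simp
qed

lemma enc_m0: "1 \<le> a \<Longrightarrow> enc n 0 v a = 0"
  unfolding enc_def by auto

lemma enc_in:
  assumes "i < n" "g < m"
  shows "enc n m v (2 + int (i*m) + int g) = int (v i g)"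
proof -
  have uniq: "i' = i \<and> g' = g" if "g' < m" "2 + int (i*m) + int g = 2 + int (i'*m + g')" for i' g'
  proof -
    have "i*m + g = i'*m + g'" using that(2) by linarith
    then have "(g + i*m) div m = (g' + i'*m) div m" "(g + i*m) mod m = (g' + i'*m) mod m" by (simp_all add: add.commute)
    then show ?thesis using assms(2) that(1) by simp
  qed
  have ex: "\<exists>i'<n. \<exists>g'<m. 2 + int (i*m) + int g = 2 + int (i'*m + g')" using assms by auto
  have "(THE x. \<exists>i'<n. \<exists>g'<m. 2 + int (i*m) + int g = 2 + int (i'*m + g') \<and> x = int (v i' g')) = int (v i g)"
  proof (rule the_equality)
    show "\<exists>i'<n. \<exists>g'<m. 2 + int (i*m) + int g = 2 + int (i'*m + g') \<and> int (v i g) = int (v i' g')"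
      using assms by auto
    fix x assume "\<exists>i'<n. \<exists>g'<m. 2 + int (i*m) + int g = 2 + int (i'*m + g') \<and> x = int (v i' g')"
    then obtain i' g' where "g' < m" "2 + int (i*m) + int g = 2 + int (i'*m + g')" "x = int (v i' g')" by blast
    then show "x = int (v i g)" using uniq by blast
  qed
  moreover have "2 + int (i*m) + int g \<noteq> 0" "2 + int (i*m) + int g \<noteq> 1"
    using of_nat_0_le_iff[of "i*m"] of_nat_0_le_iff[of g] by linarith+
  ultimately show ?thesis unfolding enc_def using ex by (simp only: if_False if_True)
qed

definition bnbody :: com where
"bnbody = Seq (Store (Const (-13)) (Sub (V (-13)) (V (-3)))) (Seq (Store (Const (-15)) (Add (V (-15)) (V (-2))))
   (Store (Const (-14)) (Sub (V (-14)) (Const 1))))"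

definition bnloop :: com where "bnloop = WhilePos (V (-14)) bnbody"

lemma bnloop_spec:
  assumes s: "s (-14) = int n" "s (-13) = gaddr m 0 0" "s (-15) = 2" "s (-3) = int m + 1" "s (-2) = int m"
   and post: "\<And>t s'. t \<le> n*4+1 \<Longrightarrow> s' (-13) = gaddr m n 0 \<Longrightarrow> s' (-15) = 2 + int (n*m) \<Longrightarrow>
      (\<forall>a. a \<noteq> -13 \<and> a \<noteq> -14 \<and> a \<noteq> -15 \<longrightarrow> s' a = s a) \<Longrightarrow> Q t s'"
  shows "wp bnloop s Q"
  unfolding bnloop_def
proof (rule wp_while[where Inv = "\<lambda>k s1. \<exists>j. j + k = n \<and> s1 (-14) = int k \<and> s1 (-13) = gaddr m j 0
     \<and> s1 (-15) = 2 + int (j*m) \<and> (\<forall>a. a \<noteq> -13 \<and> a \<noteq> -14 \<and> a \<noteq> -15 \<longrightarrow> s1 a = s a)" and k = n and B = 3])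
  show "\<exists>j. j + n = n \<and> s (-14) = int n \<and> s (-13) = gaddr m j 0
     \<and> s (-15) = 2 + int (j*m) \<and> (\<forall>a. a \<noteq> -13 \<and> a \<noteq> -14 \<and> a \<noteq> -15 \<longrightarrow> s a = s a)"
    using s by (intro exI[of _ 0]) simp
next
  fix k s1 assume "\<exists>j. j + k = n \<and> s1 (-14) = int k \<and> s1 (-13) = gaddr m j 0
     \<and> s1 (-15) = 2 + int (j*m) \<and> (\<forall>a. a \<noteq> -13 \<and> a \<noteq> -14 \<and> a \<noteq> -15 \<longrightarrow> s1 a = s a)"
  then show "0 < eval (V (-14)) s1 \<longleftrightarrow> 0 < k" by auto
next
  fix k s1 assume "\<exists>j. j + Suc k = n \<and> s1 (-14) = int (Suc k) \<and> s1 (-13) = gaddr m j 0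
     \<and> s1 (-15) = 2 + int (j*m) \<and> (\<forall>a. a \<noteq> -13 \<and> a \<noteq> -14 \<and> a \<noteq> -15 \<longrightarrow> s1 a = s a)"
  then obtain j where j: "j + Suc k = n" "s1 (-14) = int (Suc k)" "s1 (-13) = gaddr m j 0"
     "s1 (-15) = 2 + int (j*m)" "\<forall>a. a \<noteq> -13 \<and> a \<noteq> -14 \<and> a \<noteq> -15 \<longrightarrow> s1 a = s a" by blast
  have v: "s1 (-3) = int m + 1" "s1 (-2) = int m" using j(5) s by simp_all
  define s2 where "s2 = s1(-13 := gaddr m (Suc j) 0, -15 := 2 + int (Suc j * m), -14 := int k)"
  have I: "\<exists>j. j + k = n \<and> s2 (-14) = int k \<and> s2 (-13) = gaddr m j 0
     \<and> s2 (-15) = 2 + int (j*m) \<and> (\<forall>a. a \<noteq> -13 \<and> a \<noteq> -14 \<and> a \<noteq> -15 \<longrightarrow> s2 a = s a)"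
    using j(1,5) by (intro exI[of _ "Suc j"]) (simp add: s2_def)
  show "wp bnbody s1 (\<lambda>t s'. t \<le> 3 \<and> (\<exists>k'\<le>k. \<exists>j. j + k' = n \<and> s' (-14) = int k' \<and> s' (-13) = gaddr m j 0
     \<and> s' (-15) = 2 + int (j*m) \<and> (\<forall>a. a \<noteq> -13 \<and> a \<noteq> -14 \<and> a \<noteq> -15 \<longrightarrow> s' a = s a)))"
  proof (rule wp_mono)
    show "wp bnbody s1 (\<lambda>t s'. t \<le> 3 \<and> s' = s2)"
      unfolding bnbody_def
      apply (intro wp_seq wp_store)
      using j v by (simp add: s2_def fun_eq_iff)
  next
    fix t s' assume "t \<le> 3 \<and> s' = s2"
    then show "t \<le> 3 \<and> (\<exists>k'\<le>k. \<exists>j. j + k' = n \<and> s' (-14) = int k' \<and> s' (-13) = gaddr m j 0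
     \<and> s' (-15) = 2 + int (j*m) \<and> (\<forall>a. a \<noteq> -13 \<and> a \<noteq> -14 \<and> a \<noteq> -15 \<longrightarrow> s' a = s a))"
      using I by blast
  qed
next
  fix t s' assume "\<exists>j. j + 0 = n \<and> s' (-14) = int 0 \<and> s' (-13) = gaddr m j 0
     \<and> s' (-15) = 2 + int (j*m) \<and> (\<forall>a. a \<noteq> -13 \<and> a \<noteq> -14 \<and> a \<noteq> -15 \<longrightarrow> s' a = s a)"
    "t \<le> n * (3+1) + 1"
  then show "Q t s'" using post by auto
qed

definition initp :: com where
"initp = Seq (Store (Const (-1)) (V 0)) (Seq (Store (Const (-2)) (V 1))
   (Seq (Store (Const (-3)) (Add (V (-2)) (Const 1))) (Store (Const (-12)) (Const 0))))"

definition mainp :: com where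
"mainp = Seq (Store (Const (-14)) (V (-1))) (Seq (Store (Const (-13)) (Const (-100)))
  (Seq (Store (Const (-15)) (Const 2)) (Seq bnloop (Seq (Store (Sub (V (-13)) (V (-2))) (Const 1))
  (Seq (Store (Const (-4)) (Const 0)) (Seq (Store (Const (-5)) (Const 0)) (Seq cloop (Store (Const 0) (V (-12))))))))))"

definition prog :: com where
  "prog = Seq initp (IfPos (V (-2)) mainp (Store (Const 0) (Const 1)))"

lemma occ_cong: "\<forall>i\<le>n. k i = k' i \<Longrightarrow> occ n m k = occ n m k'"
  unfolding occ_def by auto

lemma eq_cong: "\<forall>i\<le>n. k i = k' i \<Longrightarrow> equitable n v k = equitable n v k'"
  unfolding equitable_def bundle_val_def by auto

definition goodout :: "nat \<Rightarrow> nat \<Rightarrow> (nat\<Rightarrow>nat\<Rightarrow>nat) \<Rightarrow> (int \<Rightarrow> int) \<Rightarrow> bool" where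
  "goodout n m v s' \<longleftrightarrow> (s' 0 \<noteq> 0 \<longleftrightarrow> (\<exists>k. occ n m k \<and> equitable n v k))
        \<and> (s' 0 \<noteq> 0 \<longrightarrow> (\<forall>i\<le>n. 0 \<le> s' (1 + int i))
              \<and> occ n m (dec_cuts s') \<and> equitable n v (dec_cuts s'))"

lemma final_A:
  assumes "CIA n m v s0 (m+1) s5" "1 \<le> n"
  shows "goodout n m v (s5(0 := s5 (-12)))"
proof -
  have "s5 (-12) = 0" "\<forall>c<m+1. \<not> good n m v (Ssum v 0 0 c) 0 0" using assms(1) unfolding CIA_def by auto
  then show ?thesis using exists_iff[OF assms(2), of m v] unfolding goodout_def by auto
qed

lemma final_B:
  assumes "CIB n m v s5"
  shows "goodout n m v (s5(0 := s5 (-12)))"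
proof -
  obtain kk where kk: "s5 (-12) = 1" "occ n m kk" "equitable n v kk" "\<forall>j\<le>n. s5 (1 + int j) = int (kk j)"
    using assms unfolding CIB_def by blast
  define sf where "sf = s5(0 := s5 (-12))"
  have o: "\<forall>j\<le>n. sf (1 + int j) = int (kk j)" using kk(4) unfolding sf_def by simp
  have d: "\<forall>i\<le>n. dec_cuts sf i = kk i" using o unfolding dec_cuts_def by simp
  have "sf 0 \<noteq> 0" unfolding sf_def using kk(1) by simp
  moreover have "occ n m (dec_cuts sf)" "equitable n v (dec_cuts sf)"
    using occ_cong[OF d] eq_cong[OF d] kk(2,3) by blast+
  moreover have "\<forall>i\<le>n. 0 \<le> sf (1 + int i)" using o by simp
  ultimately show ?thesis unfolding goodout_def sf_def[symmetric] using kk(2,3) by blast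
qed

lemma final_0:
  assumes "\<forall>j\<le>n. s (1 + int j) = 0"
  shows "goodout n 0 v (s(0 := 1))"
proof -
  define sf where "sf = s(0 := 1)"
  have d: "\<forall>i\<le>n. dec_cuts sf i = (\<lambda>_. 0) i" using assms unfolding dec_cuts_def sf_def by simp
  have oc: "occ n 0 (\<lambda>_. 0)" unfolding occ_def by simp
  have eq: "equitable n v (\<lambda>_. 0)" unfolding equitable_def bundle_val_def by simp
  have "occ n 0 (dec_cuts sf)" "equitable n v (dec_cuts sf)" using occ_cong[OF d] eq_cong[OF d] oc eq by blast+
  moreover have "\<forall>i\<le>n. 0 \<le> sf (1 + int i)" using assms unfolding sf_def by simp
  moreover have "sf 0 \<noteq> 0" unfolding sf_def by simp
  ultimately show ?thesis unfolding goodout_def sf_def[symmetric] using oc eq by blast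
qed

lemma mainp_spec:
  assumes cap: "cap_instance n m v" and m1: "1 \<le> m"
   and s1: "s1 = (enc n m v)(-1 := int n, -2 := int m, -3 := int m + 1, -12 := 0)"
  shows "wp mainp s1 (\<lambda>t s'. t \<le> 8 + n*4 + ((m+1)*(10 + (n * (6 + (m+1)*(11*m+17)) + 1) + ((n+1)*5+1)) + 1)
     \<and> goodout n m v s')"
proof -
  have n1: "1 \<le> n" using cap unfolding cap_instance_def by simp
  define e where "e = enc n m v"
  define s2 where "s2 = s1(-14 := int n, -13 := -100, -15 := 2)"
  show ?thesis
    unfolding mainp_def
    apply (rule wp_store_seq)+
    apply (rule wp_eqI[where st = s2])
     defer
     apply (simp add: s2_def s1)
    apply (rule wp_seq)
    apply (rule bnloop_spec[where n = n and m = m])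
    apply (simp_all add: s2_def s1 gaddr00)[5]
  proof -
    fix t s3
    assume t: "t \<le> n * 4 + 1" and s3: "s3 (- 13) = gaddr m n 0" "s3 (- 15) = 2 + int (n * m)"
      and f3: "\<forall>a. a \<noteq> - 13 \<and> a \<noteq> - 14 \<and> a \<noteq> - 15 \<longrightarrow> s3 a = s2 a"
    have m3: "s3 (-2) = int m" using f3 unfolding s2_def s1 by simp
    define s4 where "s4 = s3(gaddr m n m := 1, -4 := 0, -5 := 0)"
    have pos: "s4 a = e a" if "0 \<le> a" for a
    proof -
      have "s4 a = s3 a" unfolding s4_def using that by simp
      also have "\<dots> = s2 a" using f3 that by simp
      finally show ?thesis using that unfolding s2_def s1 e_def by simp
    qed
    have neg: "s4 a = 0" if "a \<le> -100" "a \<noteq> gaddr m n m" for a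
    proof -
      have "s4 a = s3 a" unfolding s4_def using that by simp
      also have "\<dots> = s2 a" using f3 that by simp
      finally show ?thesis using that enc_neg[of a n m v] unfolding s2_def s1 by simp
    qed
    have v4: "s4 (-1) = int n" "s4 (-2) = int m" "s4 (-3) = int m + 1" "s4 (-13) = gaddr m n 0"
      "s4 (-15) = 2 + int (n*m)" "s4 (-4) = 0" "s4 (-5) = 0" "s4 (-12) = 0"
      using f3 s3 unfolding s4_def s2_def s1 by simp_all
    have inp: "\<forall>i<n. \<forall>q<m. s4 (2 + int(i*m) + int q) = int (v i q)"
    proof (intro allI impI)
      fix i q assume "i < n" "q < m"
      moreover have "0 \<le> 2 + int(i*m) + int q" by simp
      ultimately show "s4 (2 + int(i*m) + int q) = int (v i q)" using pos enc_in unfolding e_def by simp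
    qed
    have rown: "\<forall>p\<le>m. s4 (gaddr m n p) = (if p = m then 1 else 0)"
    proof (intro allI impI)
      fix p assume p: "p \<le> m"
      show "s4 (gaddr m n p) = (if p = m then 1 else 0)"
      proof (cases "p = m")
        case True then show ?thesis unfolding s4_def by simp
      next
        case False
        then have "gaddr m n p \<noteq> gaddr m n m" using gaddr_inj[OF p order_refl] by simp
        then show ?thesis using neg gaddr_le False by simp
      qed
    qed
    have g: "glob n m v s4" unfolding glob_def using v4 inp rown by simp
    have A: "CIA n m v s4 0 s4" unfolding CIA_def using v4 by simp
    show "wp (Seq (Store (Sub (V (- 13)) (V (- 2))) (Const 1))
           (Seq (Store (Const (- 4)) (Const 0))
             (Seq (Store (Const (- 5)) (Const 0)) (Seq cloop (Store (Const 0) (V (- 12)))))))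
        s3 (\<lambda>t2 s2. Suc (Suc (Suc (t + t2))) \<le> 8 + n * 4 +
                  ((m + 1) * (10 + (n * (6 + (m + 1) * (11 * m + 17)) + 1) + ((n + 1) * 5 + 1)) + 1) \<and>
                  goodout n m v s2)"
      apply (rule wp_store_seq)+
      apply (rule wp_eqI[where st = s4])
       defer
       apply (simp add: s4_def s3 m3)
      apply (rule wp_seq)
      apply (rule cloop_spec[OF g n1 A])
      apply (rule wp_store)
      using t final_A[OF _ n1] final_B by auto
  qed
qed

lemma time_bound:
  assumes "1 \<le> m" "1 \<le> n"
  shows "Suc (4 + (8 + n*4 + ((m+1)*(10 + (n * (6 + (m+1)*(11*m+17)) + 1) + ((n+1)*5+1)) + 1))) \<le> 200*n*m^3 + 200"
proof -
  obtain a b where ab: "m = Suc a" "n = Suc b" using assms by (metis Suc_le_D One_nat_def)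
  show ?thesis unfolding ab by (simp add: algebra_simps power3_eq_cube)
qed

lemma prog_spec:
  assumes cap: "cap_instance n m v"
  shows "wp prog (enc n m v) (\<lambda>t s'. t \<le> 200*n*m^3 + 200 \<and> goodout n m v s')"
proof -
  have n1: "1 \<le> n" using cap unfolding cap_instance_def by simp
  define s1 where "s1 = (enc n m v)(-1 := int n, -2 := int m, -3 := int m + 1, -12 := 0)"
  have i: "wp initp (enc n m v) (\<lambda>t s'. t \<le> 4 \<and> s' = s1)"
    unfolding initp_def s1_def
    apply (intro wp_seq wp_store)
    by (simp add: enc0 enc1)
  show ?thesis
    unfolding prog_def
    apply (rule wp_seq)
    apply (rule wp_mono[OF i])
    apply (elim conjE)
    apply (rule wp_if)
  proof -
    fix t :: nat and s'
    assume t: "t \<le> 4" and s': "s' = s1" and pos: "0 < eval (V (- 2)) s'"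
    then have m1: "1 \<le> m" unfolding s1_def by simp
    show "wp mainp s' (\<lambda>ta. (\<lambda>t2 s2. t + t2 \<le> 200*n*m^3 + 200 \<and> goodout n m v s2) (Suc ta))"
      apply (rule wp_mono[OF mainp_spec[OF cap m1 s'[unfolded s1_def]]])
      using t time_bound[OF m1 n1] by auto
  next
    fix t :: nat and s'
    assume t: "t \<le> 4" and s': "s' = s1" and npos: "\<not> 0 < eval (V (- 2)) s'"
    then have m0: "m = 0" unfolding s1_def by simp
    have z: "\<forall>j\<le>n. s' (1 + int j) = 0" using enc_m0 unfolding s' s1_def m0 by simp
    show "wp (Store (Const 0) (Const 1)) s' (\<lambda>ta. (\<lambda>t2 s2. t + t2 \<le> 200*n*m^3 + 200 \<and> goodout n m v s2) (Suc ta))"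
      apply (rule wp_store)
      using t final_0[OF z, of v] m0 by simp
  qed
qed

theorem mainTheorem3:
  shows "\<exists>(P::com) (C::nat). \<forall>n m v. cap_instance n m v \<longrightarrow>
     (\<exists>t s'. big_step P (enc n m v) t s' \<and> t \<le> C * n * m ^ 3 + C
        \<and> (s' 0 \<noteq> 0 \<longleftrightarrow> (\<exists>k. occ n m k \<and> equitable n v k))
        \<and> (s' 0 \<noteq> 0 \<longrightarrow> (\<forall>i\<le>n. 0 \<le> s' (1 + int i))
              \<and> occ n m (dec_cuts s') \<and> equitable n v (dec_cuts s')))"
proof (rule exI[of _ prog], rule exI[of _ "200::nat"], intro allI impI)
  fix n m v assume "cap_instance n m v"
  from prog_spec[OF this] show "\<exists>t s'. big_step prog (enc n m v) t s' \<and> t \<le> 200 * n * m ^ 3 + 200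
        \<and> (s' 0 \<noteq> 0 \<longleftrightarrow> (\<exists>k. occ n m k \<and> equitable n v k))
        \<and> (s' 0 \<noteq> 0 \<longrightarrow> (\<forall>i\<le>n. 0 \<le> s' (1 + int i))
              \<and> occ n m (dec_cuts s') \<and> equitable n v (dec_cuts s'))"
    unfolding wp_def goodout_def by blast
qed


end
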